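(* Let $A$ and $B$ be square $\mathbb{N}$-matrices. Then $A$ and $B$ are unitally shift equivalent if and only if their unital dimension data $(G_A,G_A^+,\theta_A,u_A)$ and $(G_B,G_B^+,\theta_B,u_B)$ are isomorphic, i.e. there is a group isomorphism $\Theta\colon G_A\to G_B$ with $\Theta(G_A^+)=G_B^+$, $\Theta\circ\theta_A=\theta_B\circ\Theta$ and $\Theta(u_A)=u_B$.
   Context: $\mathbb{N}=\{0,1,2,\dots\}$. For a square $\mathbb{N}$-matrix $A$ of size $|A|$, the dimension group is $G_A=(\mathbb{Z}^{|A|}\times\mathbb{N})/\sim$, where $(v,k)\sim(v',k')$ iff there is $l\in\mathbb{N}$ (with $l\ge k,k'$) such that $(A^t)^{l-k}v=(A^t)^{l-k'}v'$; write $[v,k]$ for classes. It is the inductive limit of $\mathbb{Z}^{|A|}\xrightarrow{A^t}\mathbb{Z}^{|A|}\xrightarrow{A^t}\cdots$. The positive cone is $G_A^+=\{[v,k]: v\in\mathbb{N}^{|A|}\}$, $\theta_A$ is the automorphism induced by multiplication by $A^t$, and $u_A=[\underline1,0]$ where $\underline1$ is the all-ones column vector. Two square $\mathbb{N}$-matrices $A,B$ are shift equivalent if there are an integer $\ell\ge1$ and rectangular $\mathbb{N}$-matrices $R,S$ with $A^\ell=RS$, $B^\ell=SR$, $AR=RB$, $BS=SA$. Such a shift equivalence $(R,S)$ is unital if there are $m,k\in\mathbb{N}$ with $(B^t)^mR^t\underline{1}=(B^t)^{m+k}\underline{1}$ (equivalently, the induced map $\hat R\colon G_A\to G_B$, $\hat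 R[v,k]=[R^tv,k]$, satisfies $\hat R(u_A)=\theta_B^k(u_B)$ for some $k\in\mathbb{N}$). $A$ and $B$ are unitally shift equivalent if a unital shift equivalence from $A$ to $B$ exists. *)

theory Defs
  imports "Jordan_Normal_Form.Matrix" "HOL-Algebra.Group"
begin

definition At :: "nat mat \<Rightarrow> int mat" where
  "At A = transpose_mat (map_mat int A)"

definition one_vec :: "nat \<Rightarrow> 'a::one vec" where
  "one_vec n = vec n (\<lambda>_. 1)"

definition dg_rel :: "nat mat \<Rightarrow> ((int vec \<times> nat) \<times> (int vec \<times> nat)) set" where
  "dg_rel A = {((v,k),(v',k')). v \<in> carrier_vec (dim_row A) \<and> v' \<in> carrier_vec (dim_row A) \<and>
      (\<exists>l. l \<ge> k \<and> l \<ge> k' \<and> (At A ^\<^sub>m (l - k)) *\<^sub>v v = (At A ^\<^sub>m (l - k')) *\<^sub>v v')}"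

definition dg_class :: "nat mat \<Rightarrow> int vec \<Rightarrow> nat \<Rightarrow> (int vec \<times> nat) set" where
  "dg_class A v k = dg_rel A `` {(v,k)}"

definition dg_carrier :: "nat mat \<Rightarrow> (int vec \<times> nat) set set" where
  "dg_carrier A = {dg_class A v k | v k. v \<in> carrier_vec (dim_row A)}"

definition dg_add :: "nat mat \<Rightarrow> (int vec \<times> nat) set \<Rightarrow> (int vec \<times> nat) set \<Rightarrow> (int vec \<times> nat) set" where
  "dg_add A X Y = dg_rel A `` {((At A ^\<^sub>m k') *\<^sub>v v + (At A ^\<^sub>m k) *\<^sub>v v', k + k') | v k v' k'.
       (v,k) \<in> X \<and> (v',k') \<in> Y}"

definition dim_group :: "nat mat \<Rightarrow> (int vec \<times> nat) set monoid" where
  "dim_group A = \<lparr>carrier = dg_carrier A, mult = dg_add A,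
      one = dg_class A (0\<^sub>v (dim_row A)) 0\<rparr>"

definition dg_pos :: "nat mat \<Rightarrow> (int vec \<times> nat) set set" where
  "dg_pos A = {dg_class A v k | v k. v \<in> carrier_vec (dim_row A) \<and> (\<forall>i < dim_row A. v $ i \<ge> 0)}"

definition dg_theta :: "nat mat \<Rightarrow> (int vec \<times> nat) set \<Rightarrow> (int vec \<times> nat) set" where
  "dg_theta A X = dg_rel A `` {(At A *\<^sub>v v, k) | v k. (v,k) \<in> X}"

definition dg_unit :: "nat mat \<Rightarrow> (int vec \<times> nat) set" where
  "dg_unit A = dg_class A (one_vec (dim_row A)) 0"

definition shift_equiv_via :: "nat mat \<Rightarrow> nat mat \<Rightarrow> nat \<Rightarrow> nat mat \<Rightarrow> nat mat \<Rightarrow> bool" where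
  "shift_equiv_via A B l R S \<longleftrightarrow> l \<ge> 1 \<and>
     R \<in> carrier_mat (dim_row A) (dim_row B) \<and> S \<in> carrier_mat (dim_row B) (dim_row A) \<and>
     A ^\<^sub>m l = R * S \<and> B ^\<^sub>m l = S * R \<and> A * R = R * B \<and> B * S = S * A"

definition unital_SE :: "nat mat \<Rightarrow> nat mat \<Rightarrow> nat mat \<Rightarrow> bool" where
  "unital_SE A B R \<longleftrightarrow> (\<exists>m k. (transpose_mat B ^\<^sub>m m) *\<^sub>v (transpose_mat R *\<^sub>v one_vec (dim_row A))
      = (transpose_mat B ^\<^sub>m (m + k)) *\<^sub>v one_vec (dim_row B))"

definition unitally_shift_equivalent :: "nat mat \<Rightarrow> nat mat \<Rightarrow> bool" where
  "unitally_shift_equivalent A B \<longleftrightarrow>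
     (\<exists>l R S. shift_equiv_via A B l R S \<and> unital_SE A B R)"

end

theory Submission imports Defs begin

interpretation natint: inj_semiring_hom "of_nat :: nat \<Rightarrow> int"
  by (unfold_locales, auto)

lemma pow_mat_add: "(T::'a::semiring_1 mat) \<in> carrier_mat n n \<Longrightarrow> T ^\<^sub>m (a + b) = T ^\<^sub>m a * T ^\<^sub>m b"
proof (induction b)
  case 0 then show ?case by simp
next
  case (Suc b)
  have "T ^\<^sub>m (a + Suc b) = (T ^\<^sub>m a * T ^\<^sub>m b) * T" using Suc by simp
  also have "\<dots> = T ^\<^sub>m a * (T ^\<^sub>m b * T)" using Suc.prems by (intro assoc_mult_mat[of _ n n _ n _ n]) auto
  finally show ?case by simp
qed

lemma pow_vec_carrier[simp]: "(T::'a::semiring_1 mat) \<in> carrier_mat n n \<Longrightarrow> v \<in> carrier_vec n \<Longrightarrow> T ^\<^sub>m a *\<^sub>v v \<in> carrier_vec n"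
  by (metis mult_mat_vec_carrier pow_carrier_mat)

lemma pow_mat_one: "(T::'a::semiring_1 mat) \<in> carrier_mat n n \<Longrightarrow> T ^\<^sub>m 1 = T"
  by simp

lemma pow_mat_comm: "(T::'a::semiring_1 mat) \<in> carrier_mat n n \<Longrightarrow> T * T ^\<^sub>m a = T ^\<^sub>m a * T"
  using pow_mat_add[of T n 1 a] pow_mat_add[of T n a 1] by (simp add: add.commute)

lemma pow_vec: "(T::'a::semiring_1 mat) \<in> carrier_mat n n \<Longrightarrow> v \<in> carrier_vec n \<Longrightarrow>
   T ^\<^sub>m a *\<^sub>v (T ^\<^sub>m b *\<^sub>v v) = T ^\<^sub>m (a + b) *\<^sub>v v"
  by (simp add: pow_mat_add assoc_mult_mat_vec[of _ n n _ n v])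

lemma intertw_pow:
  assumes "(R::'a::semiring_1 mat) \<in> carrier_mat m n" "TA \<in> carrier_mat n n" "TB \<in> carrier_mat m m"
    "R * TA = TB * R"
  shows "R * TA ^\<^sub>m a = TB ^\<^sub>m a * R"
proof (induction a)
  case 0 then show ?case using assms by simp
next
  case (Suc a)
  have "R * TA ^\<^sub>m Suc a = (R * TA ^\<^sub>m a) * TA" using assms by (simp add: assoc_mult_mat[of _ m n _ n _ n])
  also have "\<dots> = (TB ^\<^sub>m a * R) * TA" using Suc by simp
  also have "\<dots> = TB ^\<^sub>m a * (R * TA)" using assms by (intro assoc_mult_mat[of _ m m _ n _ n]) auto
  also have "\<dots> = TB ^\<^sub>m a * (TB * R)" using assms by simp
  also have "\<dots> = TB ^\<^sub>m Suc a * R" using assms by (simp add: assoc_mult_mat[of _ m m _ m _ n])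
  finally show ?case .
qed

lemma intertw_pow_vec:
  assumes "(R::'a::semiring_1 mat) \<in> carrier_mat m n" "TA \<in> carrier_mat n n" "TB \<in> carrier_mat m m"
    "R * TA = TB * R" "v \<in> carrier_vec n"
  shows "TB ^\<^sub>m a *\<^sub>v (R *\<^sub>v v) = R *\<^sub>v (TA ^\<^sub>m a *\<^sub>v v)"
proof -
  have "TB ^\<^sub>m a *\<^sub>v (R *\<^sub>v v) = (TB ^\<^sub>m a * R) *\<^sub>v v" using assms by (simp add: assoc_mult_mat_vec[of _ m m _ n v])
  also have "\<dots> = (R * TA ^\<^sub>m a) *\<^sub>v v" using intertw_pow[OF assms(1-4)] by simp
  also have "\<dots> = R *\<^sub>v (TA ^\<^sub>m a *\<^sub>v v)" using assms by (simp add: assoc_mult_mat_vec[of _ m n _ n v])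
  finally show ?thesis .
qed

lemma At_carrier[simp]: "A \<in> carrier_mat r c \<Longrightarrow> At A \<in> carrier_mat c r"
  unfolding At_def by auto

lemma At_mult: "A \<in> carrier_mat r k \<Longrightarrow> B \<in> carrier_mat k c \<Longrightarrow> At (A * B) = At B * At A"
  unfolding At_def by (simp add: natint.mat_hom_mult transpose_mult[of _ r k _ c])

lemma At_pow: "A \<in> carrier_mat n n \<Longrightarrow> At (A ^\<^sub>m k) = At A ^\<^sub>m k"
proof (induction k)
  case 0 then show ?case unfolding At_def by (auto simp: natint.mat_hom_one)
next
  case (Suc k)
  then show ?case using At_mult[of "A ^\<^sub>m k" n n A n] by (simp add: pow_mat_comm[of "At A" n])
qed

lemma At_inj: "At A = At B \<Longrightarrow> A = B"
  unfolding At_def using natint.mat_hom_inj by auto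

lemma At_vec: "A \<in> carrier_mat r c \<Longrightarrow> u \<in> carrier_vec r \<Longrightarrow>
   At A *\<^sub>v map_vec int u = map_vec int (transpose_mat A *\<^sub>v u)"
  unfolding At_def by (simp add: natint.mult_mat_vec_hom[of _ c r] map_mat_transpose)

definition nonneg :: "int vec \<Rightarrow> bool" where
  "nonneg v \<longleftrightarrow> (\<forall>i < dim_vec v. v $ i \<ge> 0)"

lemma nonneg_iff: "nonneg v \<longleftrightarrow> (\<exists>u. v = map_vec int u)"
proof
  assume "nonneg v"
  then have "v = map_vec int (map_vec nat v)" unfolding nonneg_def by (intro eq_vecI) auto
  then show "\<exists>u. v = map_vec int u" by blast
qed (auto simp: nonneg_def)

lemma nonneg_At: "A \<in> carrier_mat r c \<Longrightarrow> v \<in> carrier_vec r \<Longrightarrow> nonneg v \<Longrightarrow> nonneg (At A *\<^sub>v v)"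
  unfolding nonneg_iff using At_vec by (metis carrier_vec_def index_map_vec(2) mem_Collect_eq)

lemma mat_eq_unit:
  assumes "(M::'a::semiring_1 mat) \<in> carrier_mat r c" "N \<in> carrier_mat r c"
    "\<And>i. i < c \<Longrightarrow> M *\<^sub>v unit_vec c i = N *\<^sub>v unit_vec c i"
  shows "M = N"
proof (rule eq_matI)
  fix i j assume ij: "i < dim_row N" "j < dim_col N"
  have jc: "j < c" using ij assms by auto
  have "(M *\<^sub>v unit_vec c j) $ i = (N *\<^sub>v unit_vec c j) $ i" by (simp only: assms(3)[OF jc])
  moreover have "(M *\<^sub>v unit_vec c j) $ i = M $$ (i,j)" using assms(1,2) ij by (simp add: mult_mat_vec_def)
  moreover have "(N *\<^sub>v unit_vec c j) $ i = N $$ (i,j)" using assms(1,2) ij by (simp add: mult_mat_vec_def)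
  ultimately show "M $$ (i, j) = N $$ (i, j)" by simp
qed (use assms in auto)


lemma mat_vec_zero[simp]: "(M::'a::semiring_1 mat) \<in> carrier_mat r c \<Longrightarrow> M *\<^sub>v 0\<^sub>v c = 0\<^sub>v r"
  by (intro eq_vecI) auto

lemma mat_vec_uminus: "(M::'a::ring_1 mat) \<in> carrier_mat r c \<Longrightarrow> v \<in> carrier_vec c \<Longrightarrow> M *\<^sub>v (- v) = - (M *\<^sub>v v)"
  by (intro eq_vecI) auto

lemma powc: "(T::'a::semiring_1 mat) \<in> carrier_mat n n \<Longrightarrow> v \<in> carrier_vec n \<Longrightarrow> w \<in> carrier_vec n \<Longrightarrow>
   T ^\<^sub>m a *\<^sub>v v = T ^\<^sub>m b *\<^sub>v w \<Longrightarrow> T ^\<^sub>m (c + a) *\<^sub>v v = T ^\<^sub>m (c + b) *\<^sub>v w"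
  by (metis pow_vec)

lemma powc2: "(T::'a::semiring_1 mat) \<in> carrier_mat n n \<Longrightarrow> v \<in> carrier_vec n \<Longrightarrow> w \<in> carrier_vec n \<Longrightarrow>
   T ^\<^sub>m a *\<^sub>v v = T ^\<^sub>m b *\<^sub>v w \<Longrightarrow> c + a = a' \<Longrightarrow> c + b = b' \<Longrightarrow> T ^\<^sub>m a' *\<^sub>v v = T ^\<^sub>m b' *\<^sub>v w"
  using powc by blast

lemma img_eq_class: "equiv E r \<Longrightarrow> x \<in> S \<Longrightarrow> S \<subseteq> r `` {x} \<Longrightarrow> r `` S = r `` {x}"
proof -
  assume e: "equiv E r" and x: "x \<in> S" and s: "S \<subseteq> r `` {x}"
  have "r `` {y} = r `` {x}" if "y \<in> S" for y
    using s that e by (metis Image_singleton_iff equiv_class_eq subsetD)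
  then show ?thesis using x by blast
qed

lemma rel_iff:
  assumes A: "A \<in> carrier_mat n n"
  shows "((v,k),(v',k')) \<in> dg_rel A \<longleftrightarrow> v \<in> carrier_vec n \<and> v' \<in> carrier_vec n \<and>
     (\<exists>p. At A ^\<^sub>m (p + k') *\<^sub>v v = At A ^\<^sub>m (p + k) *\<^sub>v v')"
proof -
  have T: "At A \<in> carrier_mat n n" using A by simp
  have dr: "dim_row A = n" using A by simp
  show ?thesis
  proof
    assume "((v,k),(v',k')) \<in> dg_rel A"
    then obtain l where v: "v \<in> carrier_vec n" "v' \<in> carrier_vec n" and l: "l \<ge> k" "l \<ge> k'"
      "At A ^\<^sub>m (l - k) *\<^sub>v v = At A ^\<^sub>m (l - k') *\<^sub>v v'" unfolding dg_rel_def dr by auto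
    have "At A ^\<^sub>m (l + k') *\<^sub>v v = At A ^\<^sub>m (l + k) *\<^sub>v v'"
      by (rule powc2[OF T v l(3), of "k + k'"]) (use l in simp_all)
    then show "v \<in> carrier_vec n \<and> v' \<in> carrier_vec n \<and>
     (\<exists>p. At A ^\<^sub>m (p + k') *\<^sub>v v = At A ^\<^sub>m (p + k) *\<^sub>v v')" using v by blast
  next
    assume "v \<in> carrier_vec n \<and> v' \<in> carrier_vec n \<and>
     (\<exists>p. At A ^\<^sub>m (p + k') *\<^sub>v v = At A ^\<^sub>m (p + k) *\<^sub>v v')"
    then obtain p where v: "v \<in> carrier_vec n" "v' \<in> carrier_vec n"
      and p: "At A ^\<^sub>m (p + k') *\<^sub>v v = At A ^\<^sub>m (p + k) *\<^sub>v v'" by blast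
    have e: "(p + k + k') - k = p + k'" "(p + k + k') - k' = p + k" by auto
    have "v \<in> carrier_vec n \<and> v' \<in> carrier_vec n \<and> (\<exists>l. l \<ge> k \<and> l \<ge> k' \<and>
       At A ^\<^sub>m (l - k) *\<^sub>v v = At A ^\<^sub>m (l - k') *\<^sub>v v')"
      using v p by (intro conjI exI[of _ "p + k + k'"]) simp_all
    then show "((v,k),(v',k')) \<in> dg_rel A" unfolding dg_rel_def dr by simp
  qed
qed

lemma dg_equiv:
  assumes A: "A \<in> carrier_mat n n"
  shows "equiv (carrier_vec n \<times> UNIV) (dg_rel A)"
proof -
  have T: "At A \<in> carrier_mat n n" using A by simp
  show ?thesis
  proof (rule equivI)
    show "dg_rel A \<subseteq> (carrier_vec n \<times> UNIV) \<times> (carrier_vec n \<times> UNIV)"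
      unfolding dg_rel_def using A by auto
    show "refl_on (carrier_vec n \<times> UNIV) (dg_rel A)"
      unfolding refl_on_def
    proof (intro ballI)
      fix x :: "int vec \<times> nat" assume "x \<in> carrier_vec n \<times> UNIV"
      then obtain v k where x: "x = (v,k)" "v \<in> carrier_vec n" by auto
      show "(x,x) \<in> dg_rel A" unfolding x(1) by (rule rel_iff[OF A, THEN iffD2]) (use x in blast)
    qed
    show "sym (dg_rel A)" unfolding sym_def
    proof (intro allI impI)
      fix x y assume xy: "(x,y) \<in> dg_rel A"
      obtain v k v' k' where xyz: "x = (v,k)" "y = (v',k')" by (metis prod.exhaust)
      from xy[unfolded xyz rel_iff[OF A]] obtain p where
        "v \<in> carrier_vec n" "v' \<in> carrier_vec n" "At A ^\<^sub>m (p + k') *\<^sub>v v = At A ^\<^sub>m (p + k) *\<^sub>v v'"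
        by blast
      then show "(y,x) \<in> dg_rel A" unfolding xyz rel_iff[OF A] by metis
    qed
    show "trans (dg_rel A)" unfolding trans_def
    proof (intro allI impI)
      fix x y z assume xy: "(x,y) \<in> dg_rel A" and yz: "(y,z) \<in> dg_rel A"
      obtain vx kx vy ky vz kz where xyz: "x = (vx,kx)" "y = (vy,ky)" "z = (vz,kz)"
        by (metis prod.exhaust)
      from xy[unfolded xyz rel_iff[OF A]] obtain p1 where
        c: "vx \<in> carrier_vec n" "vy \<in> carrier_vec n" and
        p1: "At A ^\<^sub>m (p1 + ky) *\<^sub>v vx = At A ^\<^sub>m (p1 + kx) *\<^sub>v vy" by blast
      from yz[unfolded xyz rel_iff[OF A]] obtain p2 where
        c2: "vz \<in> carrier_vec n" and
        p2: "At A ^\<^sub>m (p2 + kz) *\<^sub>v vy = At A ^\<^sub>m (p2 + ky) *\<^sub>v vz" by blast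
      have e1:
        "At A ^\<^sub>m (p1 + p2 + ky + kz) *\<^sub>v vx = At A ^\<^sub>m (p1 + p2 + kx + kz) *\<^sub>v vy"
        by (rule powc2[OF T c p1, of "p2 + kz"]) simp_all
      have e2:
        "At A ^\<^sub>m (p1 + p2 + kx + kz) *\<^sub>v vy = At A ^\<^sub>m (p1 + p2 + ky + kx) *\<^sub>v vz"
        by (rule powc2[OF T c(2) c2 p2, of "p1 + kx"]) simp_all
      have "At A ^\<^sub>m ((p1 + p2 + ky) + kz) *\<^sub>v vx = At A ^\<^sub>m ((p1 + p2 + ky) + kx) *\<^sub>v vz"
        using e1 e2 by simp
      then show "(x,z) \<in> dg_rel A" unfolding xyz rel_iff[OF A] using c c2 by blast
    qed
  qed
qed

lemma class_eq:
  assumes A: "A \<in> carrier_mat n n" and v: "v \<in> carrier_vec n" "v' \<in> carrier_vec n"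
  shows "dg_class A v k = dg_class A v' k' \<longleftrightarrow> (\<exists>p. At A ^\<^sub>m (p + k') *\<^sub>v v = At A ^\<^sub>m (p + k) *\<^sub>v v')"
proof -
  have "dg_class A v k = dg_class A v' k' \<longleftrightarrow> ((v,k),(v',k')) \<in> dg_rel A"
    unfolding dg_class_def using equiv_class_eq_iff[OF dg_equiv[OF A]] v by auto
  then show ?thesis using rel_iff[OF A] v by blast
qed

lemma class_shift:
  assumes A: "A \<in> carrier_mat n n" and v: "v \<in> carrier_vec n"
  shows "dg_class A v k = dg_class A (At A ^\<^sub>m a *\<^sub>v v) (k + a)"
proof -
  have T: "At A \<in> carrier_mat n n" using A by simp
  have "At A ^\<^sub>m (0 + (k + a)) *\<^sub>v v = At A ^\<^sub>m (0 + k) *\<^sub>v (At A ^\<^sub>m a *\<^sub>v v)"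
    using pow_vec[OF T v, of k a] by simp
  moreover have "At A ^\<^sub>m a *\<^sub>v v \<in> carrier_vec n" using T v by simp
  ultimately show ?thesis using class_eq[OF A v, of "At A ^\<^sub>m a *\<^sub>v v" k "k + a"] by blast
qed

lemma class_mem: "A \<in> carrier_mat n n \<Longrightarrow> v \<in> carrier_vec n \<Longrightarrow> (v,k) \<in> dg_class A v k"
  unfolding dg_class_def using rel_iff[of A n v k v k] by auto

lemma mem_class: "A \<in> carrier_mat n n \<Longrightarrow> v \<in> carrier_vec n \<Longrightarrow> (w,j) \<in> dg_class A v k \<Longrightarrow>
   w \<in> carrier_vec n \<and> (\<exists>p. At A ^\<^sub>m (p + j) *\<^sub>v v = At A ^\<^sub>m (p + k) *\<^sub>v w)"
  unfolding dg_class_def using rel_iff by fastforce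

lemma carrier_dg: "A \<in> carrier_mat n n \<Longrightarrow> X \<in> carrier (dim_group A) \<longleftrightarrow> (\<exists>v k. v \<in> carrier_vec n \<and> X = dg_class A v k)"
  unfolding dim_group_def dg_carrier_def by auto


lemma dist: "(T::'a::semiring_1 mat) \<in> carrier_mat n n \<Longrightarrow> v \<in> carrier_vec n \<Longrightarrow> w \<in> carrier_vec n \<Longrightarrow>
  T ^\<^sub>m a *\<^sub>v (T ^\<^sub>m b *\<^sub>v v + T ^\<^sub>m c *\<^sub>v w) = T ^\<^sub>m (a + b) *\<^sub>v v + T ^\<^sub>m (a + c) *\<^sub>v w"
  by (simp add: mult_add_distrib_mat_vec[of _ n n] pow_vec)

lemma add_class:
  assumes A: "A \<in> carrier_mat n n" and v: "v \<in> carrier_vec n" "v' \<in> carrier_vec n"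
  shows "dg_add A (dg_class A v k) (dg_class A v' k') =
     dg_class A (At A ^\<^sub>m k' *\<^sub>v v + At A ^\<^sub>m k *\<^sub>v v') (k + k')"
proof -
  have T: "At A \<in> carrier_mat n n" using A by simp
  let ?T = "At A"
  let ?S = "{(?T ^\<^sub>m k1' *\<^sub>v v1 + ?T ^\<^sub>m k1 *\<^sub>v v1', k1 + k1') | v1 k1 v1' k1'.
       (v1,k1) \<in> dg_class A v k \<and> (v1',k1') \<in> dg_class A v' k'}"
  let ?x = "(?T ^\<^sub>m k' *\<^sub>v v + ?T ^\<^sub>m k *\<^sub>v v', k + k')"
  have "dg_rel A `` ?S = dg_rel A `` {?x}"
  proof (rule img_eq_class[OF dg_equiv[OF A]])
    show "?x \<in> ?S" using class_mem[OF A v(1)] class_mem[OF A v(2)]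
      by (intro CollectI exI[of _ v] exI[of _ k] exI[of _ v'] exI[of _ k']) simp
    show "?S \<subseteq> dg_rel A `` {?x}"
    proof
      fix y assume "y \<in> ?S"
      then obtain v1 k1 v1' k1' where y: "y = (?T ^\<^sub>m k1' *\<^sub>v v1 + ?T ^\<^sub>m k1 *\<^sub>v v1', k1 + k1')"
        and m1: "(v1,k1) \<in> dg_class A v k" and m2: "(v1',k1') \<in> dg_class A v' k'" by blast
      from mem_class[OF A v(1) m1] obtain p1 where c1: "v1 \<in> carrier_vec n"
        and p1: "?T ^\<^sub>m (p1 + k1) *\<^sub>v v = ?T ^\<^sub>m (p1 + k) *\<^sub>v v1" by blast
      from mem_class[OF A v(2) m2] obtain p2 where c2: "v1' \<in> carrier_vec n"
        and p2: "?T ^\<^sub>m (p2 + k1') *\<^sub>v v' = ?T ^\<^sub>m (p2 + k') *\<^sub>v v1'" by blast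
      let ?p = "p1 + p2"
      have e1: "?T ^\<^sub>m (?p + (k1 + k1') + k') *\<^sub>v v = ?T ^\<^sub>m (?p + (k + k') + k1') *\<^sub>v v1"
        by (rule powc2[OF T v(1) c1 p1, of "p2 + k1' + k'"]) simp_all
      have e2: "?T ^\<^sub>m (?p + (k1 + k1') + k) *\<^sub>v v' = ?T ^\<^sub>m (?p + (k + k') + k1) *\<^sub>v v1'"
        by (rule powc2[OF T v(2) c2 p2, of "p1 + k1 + k"]) simp_all
      have "?T ^\<^sub>m (?p + (k1 + k1')) *\<^sub>v (?T ^\<^sub>m k' *\<^sub>v v + ?T ^\<^sub>m k *\<^sub>v v') =
            ?T ^\<^sub>m (?p + (k + k')) *\<^sub>v (?T ^\<^sub>m k1' *\<^sub>v v1 + ?T ^\<^sub>m k1 *\<^sub>v v1')"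
        using e1 e2 by (simp only: dist[OF T v] dist[OF T c1 c2])
      moreover have "?T ^\<^sub>m k' *\<^sub>v v + ?T ^\<^sub>m k *\<^sub>v v' \<in> carrier_vec n" using T v by simp
      moreover have "?T ^\<^sub>m k1' *\<^sub>v v1 + ?T ^\<^sub>m k1 *\<^sub>v v1' \<in> carrier_vec n" using T c1 c2 by simp
      ultimately have "(?x, y) \<in> dg_rel A" unfolding y
        by (intro rel_iff[OF A, THEN iffD2] conjI exI[of _ ?p])
      then show "y \<in> dg_rel A `` {?x}" by blast
    qed
  qed
  then show ?thesis unfolding dg_add_def dg_class_def[of A _ "k + k'"] by simp
qed

lemma theta_class:
  assumes A: "A \<in> carrier_mat n n" and v: "v \<in> carrier_vec n"
  shows "dg_theta A (dg_class A v k) = dg_class A (At A *\<^sub>v v) k"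
proof -
  have T: "At A \<in> carrier_mat n n" using A by simp
  let ?T = "At A"
  let ?S = "{(?T *\<^sub>v v1, k1) | v1 k1. (v1,k1) \<in> dg_class A v k}"
  let ?x = "(?T *\<^sub>v v, k)"
  have "dg_rel A `` ?S = dg_rel A `` {?x}"
  proof (rule img_eq_class[OF dg_equiv[OF A]])
    show "?x \<in> ?S" using class_mem[OF A v]
      by (intro CollectI exI[of _ v] exI[of _ k]) simp
    show "?S \<subseteq> dg_rel A `` {?x}"
    proof
      fix y assume "y \<in> ?S"
      then obtain v1 k1 where y: "y = (?T *\<^sub>v v1, k1)"
        and m1: "(v1,k1) \<in> dg_class A v k" by blast
      from mem_class[OF A v m1] obtain p1 where c1: "v1 \<in> carrier_vec n"
        and p1: "?T ^\<^sub>m (p1 + k1) *\<^sub>v v = ?T ^\<^sub>m (p1 + k) *\<^sub>v v1" by blast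
      have e1: "?T ^\<^sub>m (p1 + k1 + 1) *\<^sub>v v = ?T ^\<^sub>m (p1 + k + 1) *\<^sub>v v1"
        by (rule powc2[OF T v c1 p1, of 1]) simp_all
      have "?T ^\<^sub>m (p1 + k1) *\<^sub>v (?T ^\<^sub>m 1 *\<^sub>v v) = ?T ^\<^sub>m (p1 + k) *\<^sub>v (?T ^\<^sub>m 1 *\<^sub>v v1)"
        using e1 by (simp only: pow_vec[OF T v] pow_vec[OF T c1])
      then have "?T ^\<^sub>m (p1 + k1) *\<^sub>v (?T *\<^sub>v v) = ?T ^\<^sub>m (p1 + k) *\<^sub>v (?T *\<^sub>v v1)"
        using pow_mat_one[OF T] by simp
      moreover have "?T *\<^sub>v v \<in> carrier_vec n" "?T *\<^sub>v v1 \<in> carrier_vec n" using T v c1 by auto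
      ultimately have "(?x, y) \<in> dg_rel A" unfolding y
        by (intro rel_iff[OF A, THEN iffD2] conjI exI[of _ p1])
      then show "y \<in> dg_rel A `` {?x}" by blast
    qed
  qed
  then show ?thesis unfolding dg_theta_def dg_class_def[of A _ k] by simp
qed


lemma mult_dg: "x \<otimes>\<^bsub>dim_group A\<^esub> y = dg_add A x y"
  unfolding dim_group_def by simp

lemma one_dg: "\<one>\<^bsub>dim_group A\<^esub> = dg_class A (0\<^sub>v (dim_row A)) 0"
  unfolding dim_group_def by simp

lemma class_carrier: "A \<in> carrier_mat n n \<Longrightarrow> v \<in> carrier_vec n \<Longrightarrow> dg_class A v k \<in> carrier (dim_group A)"
  using carrier_dg[of A n "dg_class A v k"] by blast

lemma dg_group:
  assumes A: "A \<in> carrier_mat n n"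
  shows "group (dim_group A)"
proof -
  have T: "At A \<in> carrier_mat n n" using A by simp
  have dr: "dim_row A = n" using A by simp
  note cd = carrier_dg[OF A]
  show ?thesis
  proof (rule groupI)
    fix x y assume xc: "x \<in> carrier (dim_group A)" and yc: "y \<in> carrier (dim_group A)"
    from cd[THEN iffD1, OF xc] obtain v k where "v \<in> carrier_vec n" "x = dg_class A v k" by blast
    moreover from cd[THEN iffD1, OF yc] obtain v' k' where "v' \<in> carrier_vec n" "y = dg_class A v' k'" by blast
    ultimately show "x \<otimes>\<^bsub>dim_group A\<^esub> y \<in> carrier (dim_group A)"
      unfolding mult_dg using add_class[OF A] class_carrier[OF A] T by simp
  next
    show "\<one>\<^bsub>dim_group A\<^esub> \<in> carrier (dim_group A)" unfolding one_dg dr using class_carrier[OF A] by simp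
  next
    fix x y z assume xc: "x \<in> carrier (dim_group A)" and yc: "y \<in> carrier (dim_group A)"
      and zc: "z \<in> carrier (dim_group A)"
    from cd[THEN iffD1, OF xc] obtain v k where c1: "v \<in> carrier_vec n" "x = dg_class A v k" by blast
    from cd[THEN iffD1, OF yc] obtain v' k' where c2: "v' \<in> carrier_vec n" "y = dg_class A v' k'" by blast
    from cd[THEN iffD1, OF zc] obtain v'' k'' where c3: "v'' \<in> carrier_vec n" "z = dg_class A v'' k''" by blast
    have c: "v \<in> carrier_vec n" "v' \<in> carrier_vec n" "v'' \<in> carrier_vec n" using c1 c2 c3 by auto
    have xyz: "x = dg_class A v k" "y = dg_class A v' k'" "z = dg_class A v'' k''" using c1 c2 c3 by auto
    have e: "At A ^\<^sub>m k'' *\<^sub>v (At A ^\<^sub>m k' *\<^sub>v v + At A ^\<^sub>m k *\<^sub>v v') + At A ^\<^sub>m (k + k') *\<^sub>v v'' =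
      At A ^\<^sub>m (k' + k'') *\<^sub>v v + At A ^\<^sub>m k *\<^sub>v (At A ^\<^sub>m k'' *\<^sub>v v' + At A ^\<^sub>m k' *\<^sub>v v'')"
      using c T by (simp add: dist[OF T] add.commute add.left_commute assoc_add_vec[of _ n])
    show "x \<otimes>\<^bsub>dim_group A\<^esub> y \<otimes>\<^bsub>dim_group A\<^esub> z = x \<otimes>\<^bsub>dim_group A\<^esub> (y \<otimes>\<^bsub>dim_group A\<^esub> z)"
      unfolding mult_dg xyz using c T by (simp add: add_class[OF A] e add.assoc)
  next
    fix x assume xc: "x \<in> carrier (dim_group A)"
    from cd[THEN iffD1, OF xc] obtain v k where c: "v \<in> carrier_vec n" and x: "x = dg_class A v k" by blast
    have "At A ^\<^sub>m k *\<^sub>v 0\<^sub>v n = 0\<^sub>v n" using T by (metis mat_vec_zero pow_carrier_mat)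
    moreover have "At A ^\<^sub>m 0 *\<^sub>v v = v" using T c by simp
    ultimately show "\<one>\<^bsub>dim_group A\<^esub> \<otimes>\<^bsub>dim_group A\<^esub> x = x"
      unfolding mult_dg one_dg dr x using c by (simp add: add_class[OF A])
  next
    fix x assume xc: "x \<in> carrier (dim_group A)"
    from cd[THEN iffD1, OF xc] obtain v k where c: "v \<in> carrier_vec n" and x: "x = dg_class A v k" by blast
    have "At A ^\<^sub>m k *\<^sub>v (- v) + At A ^\<^sub>m k *\<^sub>v v = 0\<^sub>v n"
      using T c by (simp add: mat_vec_uminus[of _ n n])
    then have "dg_class A (- v) k \<otimes>\<^bsub>dim_group A\<^esub> x = dg_class A (0\<^sub>v n) (k + k)"
      unfolding mult_dg x using c by (simp add: add_class[OF A])
    also have "\<dots> = dg_class A (0\<^sub>v n) 0"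
      using class_shift[OF A zero_carrier_vec, of 0 "k + k"] T by (metis mat_vec_zero pow_carrier_mat add_0)
    finally show "\<exists>y\<in>carrier (dim_group A). y \<otimes>\<^bsub>dim_group A\<^esub> x = \<one>\<^bsub>dim_group A\<^esub>"
      unfolding one_dg dr using class_carrier[OF A, of "- v" k] c by auto
  qed
qed


definition mapc :: "nat mat \<Rightarrow> int mat \<Rightarrow> nat \<Rightarrow> (int vec \<times> nat) set \<Rightarrow> (int vec \<times> nat) set" where
  "mapc B M K X = dg_rel B `` {(M *\<^sub>v v, j + K) | v j. (v,j) \<in> X}"

lemma mapc_class:
  assumes A: "A \<in> carrier_mat n n" and B: "B \<in> carrier_mat m m" and M: "M \<in> carrier_mat m n"
    and MT: "M * At A = At B * M" and v: "v \<in> carrier_vec n"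
  shows "mapc B M K (dg_class A v j) = dg_class B (M *\<^sub>v v) (j + K)"
proof -
  have TA: "At A \<in> carrier_mat n n" using A by simp
  have TB: "At B \<in> carrier_mat m m" using B by simp
  let ?S = "{(M *\<^sub>v v1, j1 + K) | v1 j1. (v1,j1) \<in> dg_class A v j}"
  let ?x = "(M *\<^sub>v v, j + K)"
  have "dg_rel B `` ?S = dg_rel B `` {?x}"
  proof (rule img_eq_class[OF dg_equiv[OF B]])
    show "?x \<in> ?S" using class_mem[OF A v]
      by (intro CollectI exI[of _ v] exI[of _ j]) simp
    show "?S \<subseteq> dg_rel B `` {?x}"
    proof
      fix y assume "y \<in> ?S"
      then obtain v1 j1 where y: "y = (M *\<^sub>v v1, j1 + K)"
        and m1: "(v1,j1) \<in> dg_class A v j" by blast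
      from mem_class[OF A v m1] obtain p1 where c1: "v1 \<in> carrier_vec n"
        and p1: "At A ^\<^sub>m (p1 + j1) *\<^sub>v v = At A ^\<^sub>m (p1 + j) *\<^sub>v v1" by blast
      have e1: "At A ^\<^sub>m (p1 + (j1 + K)) *\<^sub>v v = At A ^\<^sub>m (p1 + (j + K)) *\<^sub>v v1"
        by (rule powc2[OF TA v c1 p1, of K]) simp_all
      have "At B ^\<^sub>m (p1 + (j1 + K)) *\<^sub>v (M *\<^sub>v v) = At B ^\<^sub>m (p1 + (j + K)) *\<^sub>v (M *\<^sub>v v1)"
        using e1 by (simp only: intertw_pow_vec[OF M TA TB MT v] intertw_pow_vec[OF M TA TB MT c1])
      moreover have "M *\<^sub>v v \<in> carrier_vec m" "M *\<^sub>v v1 \<in> carrier_vec m" using M v c1 by auto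
      ultimately have "(?x, y) \<in> dg_rel B" unfolding y
        by (intro rel_iff[OF B, THEN iffD2] conjI exI[of _ p1])
      then show "y \<in> dg_rel B `` {?x}" by blast
    qed
  qed
  then show ?thesis unfolding mapc_def dg_class_def[of B _ "j + K"] by simp
qed

lemma cform_hom:
  assumes A: "A \<in> carrier_mat n n" and B: "B \<in> carrier_mat m m" and M: "M \<in> carrier_mat m n"
    and MT: "M * At A = At B * M"
    and F: "\<And>v j. v \<in> carrier_vec n \<Longrightarrow> \<Phi> (dg_class A v j) = dg_class B (M *\<^sub>v v) (j + K)"
  shows "\<Phi> \<in> hom (dim_group A) (dim_group B)"
proof (rule homI)
  have TA: "At A \<in> carrier_mat n n" using A by simp
  have TB: "At B \<in> carrier_mat m m" using B by simp
  fix x assume xc: "x \<in> carrier (dim_group A)"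
  from carrier_dg[OF A, THEN iffD1, OF xc] obtain v k where "v \<in> carrier_vec n" "x = dg_class A v k" by blast
  then show "\<Phi> x \<in> carrier (dim_group B)" using F class_carrier[OF B] M by simp
next
  have TA: "At A \<in> carrier_mat n n" using A by simp
  have TB: "At B \<in> carrier_mat m m" using B by simp
  fix x y assume xc: "x \<in> carrier (dim_group A)" and yc: "y \<in> carrier (dim_group A)"
  from carrier_dg[OF A, THEN iffD1, OF xc] obtain v j where v: "v \<in> carrier_vec n" and x: "x = dg_class A v j" by blast
  from carrier_dg[OF A, THEN iffD1, OF yc] obtain v' j' where v': "v' \<in> carrier_vec n" and y: "y = dg_class A v' j'" by blast
  let ?w = "At A ^\<^sub>m j' *\<^sub>v v + At A ^\<^sub>m j *\<^sub>v v'"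
  have wc: "?w \<in> carrier_vec n" using TA v v' by simp
  have Mw: "M *\<^sub>v ?w \<in> carrier_vec m" using M wc by simp
  have "\<Phi> (x \<otimes>\<^bsub>dim_group A\<^esub> y) = dg_class B (M *\<^sub>v ?w) (j + j' + K)"
    unfolding x y mult_dg add_class[OF A v v'] using F[OF wc] .
  also have "\<dots> = dg_class B (At B ^\<^sub>m K *\<^sub>v (M *\<^sub>v ?w)) (j + j' + K + K)"
    by (rule class_shift[OF B Mw])
  also have "At B ^\<^sub>m K *\<^sub>v (M *\<^sub>v ?w) = M *\<^sub>v (At A ^\<^sub>m K *\<^sub>v ?w)"
    by (rule intertw_pow_vec[OF M TA TB MT wc])
  also have "\<dots> = M *\<^sub>v (At A ^\<^sub>m (K + j') *\<^sub>v v) + M *\<^sub>v (At A ^\<^sub>m (K + j) *\<^sub>v v')"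
    using dist[OF TA v v'] M TA v v' by (simp add: mult_add_distrib_mat_vec[of M m n])
  also have "\<dots> = At B ^\<^sub>m (j' + K) *\<^sub>v (M *\<^sub>v v) + At B ^\<^sub>m (j + K) *\<^sub>v (M *\<^sub>v v')"
    using intertw_pow_vec[OF M TA TB MT v] intertw_pow_vec[OF M TA TB MT v'] by (simp add: add.commute)
  also have "j + j' + K + K = (j + K) + (j' + K)" by simp
  also have "dg_class B (At B ^\<^sub>m (j' + K) *\<^sub>v (M *\<^sub>v v) + At B ^\<^sub>m (j + K) *\<^sub>v (M *\<^sub>v v')) ((j + K) + (j' + K))
     = \<Phi> x \<otimes>\<^bsub>dim_group B\<^esub> \<Phi> y"
    unfolding x y F[OF v] F[OF v'] mult_dg using add_class[OF B] M v v' by simp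
  finally show "\<Phi> (x \<otimes>\<^bsub>dim_group A\<^esub> y) = \<Phi> x \<otimes>\<^bsub>dim_group B\<^esub> \<Phi> y" .
qed


lemma map_one_vec: "map_vec int (one_vec k) = one_vec k"
  unfolding one_vec_def by (intro eq_vecI) auto

lemma one_vec_carrier[simp]: "one_vec k \<in> carrier_vec k"
  unfolding one_vec_def by simp

lemma map_Tpow: "B \<in> carrier_mat m m \<Longrightarrow> u \<in> carrier_vec m \<Longrightarrow>
  map_vec int ((transpose_mat B ^\<^sub>m p) *\<^sub>v u) = At B ^\<^sub>m p *\<^sub>v map_vec int u"
proof -
  assume B: "B \<in> carrier_mat m m" and u: "u \<in> carrier_vec m"
  have BT: "transpose_mat B \<in> carrier_mat m m" using B by simp
  have "map_vec int ((transpose_mat B ^\<^sub>m p) *\<^sub>v u) = map_mat int (transpose_mat B ^\<^sub>m p) *\<^sub>v map_vec int u"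
    using natint.mult_mat_vec_hom[OF pow_carrier_mat[OF BT] u] .
  also have "map_mat int (transpose_mat B ^\<^sub>m p) = (map_mat int (transpose_mat B)) ^\<^sub>m p"
    using natint.mat_hom_pow[OF BT] .
  also have "map_mat int (transpose_mat B) = At B" unfolding At_def map_mat_transpose ..
  finally show ?thesis .
qed

lemma unital_iff:
  assumes A: "A \<in> carrier_mat n n" and B: "B \<in> carrier_mat m m" and R: "R \<in> carrier_mat n m"
  shows "unital_SE A B R \<longleftrightarrow> (\<exists>p k. At B ^\<^sub>m p *\<^sub>v (At R *\<^sub>v one_vec n) = At B ^\<^sub>m (p + k) *\<^sub>v one_vec m)"
proof -
  have e1: "map_vec int ((transpose_mat B ^\<^sub>m p) *\<^sub>v (transpose_mat R *\<^sub>v one_vec n)) =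
     At B ^\<^sub>m p *\<^sub>v (At R *\<^sub>v one_vec n)" for p
    using map_Tpow[OF B, of "transpose_mat R *\<^sub>v one_vec n" p] R At_vec[OF R, of "one_vec n"]
    by (simp add: map_one_vec)
  have e2: "map_vec int ((transpose_mat B ^\<^sub>m p) *\<^sub>v one_vec m) = At B ^\<^sub>m p *\<^sub>v one_vec m" for p
    using map_Tpow[OF B, of "one_vec m" p] by (simp add: map_one_vec)
  show ?thesis unfolding unital_SE_def using A B e1 e2
    by (metis carrier_matD(1) natint.vec_hom_inj)
qed

lemma pos_iff: "A \<in> carrier_mat n n \<Longrightarrow> X \<in> dg_pos A \<longleftrightarrow> (\<exists>v k. v \<in> carrier_vec n \<and> nonneg v \<and> X = dg_class A v k)"
  unfolding dg_pos_def nonneg_def by auto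

lemma st_rt: "St \<in> carrier_mat n m \<Longrightarrow> Rt \<in> carrier_mat m n \<Longrightarrow> St * Rt = X \<Longrightarrow> w \<in> carrier_vec n \<Longrightarrow>
  St *\<^sub>v (Rt *\<^sub>v w) = X *\<^sub>v w"
  by (metis assoc_mult_mat_vec)


lemma forward:
  assumes A: "A \<in> carrier_mat n n" and B: "B \<in> carrier_mat m m"
    and SE: "shift_equiv_via A B l R S" and U: "unital_SE A B R"
  shows "\<exists>\<Theta>. \<Theta> \<in> iso (dim_group A) (dim_group B) \<and>
         \<Theta> ` dg_pos A = dg_pos B \<and>
         (\<forall>X \<in> carrier (dim_group A). \<Theta> (dg_theta A X) = dg_theta B (\<Theta> X)) \<and>
         \<Theta> (dg_unit A) = dg_unit B"
proof -
  have dA: "dim_row A = n" and dB: "dim_row B = m" using A B by auto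
  from SE[unfolded shift_equiv_via_def dA dB] have l1: "l \<ge> 1" and R: "R \<in> carrier_mat n m"
    and S: "S \<in> carrier_mat m n" and h1': "A ^\<^sub>m l = R * S" and h2': "B ^\<^sub>m l = S * R"
    and h3': "A * R = R * B" and h4': "B * S = S * A" by auto
  define TA where "TA = At A"
  define TB where "TB = At B"
  define Rt where "Rt = At R"
  define St where "St = At S"
  have TA: "TA \<in> carrier_mat n n" and TB: "TB \<in> carrier_mat m m" and Rt: "Rt \<in> carrier_mat m n"
    and St: "St \<in> carrier_mat n m" using A B R S unfolding TA_def TB_def Rt_def St_def by auto
  have h1: "St * Rt = TA ^\<^sub>m l" unfolding St_def Rt_def TA_def
    using At_mult[OF R S] At_pow[OF A] h1' by metis
  have h2: "Rt * St = TB ^\<^sub>m l" unfolding St_def Rt_def TB_def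
    using At_mult[OF S R] At_pow[OF B] h2' by metis
  have h3: "Rt * TA = TB * Rt" unfolding TA_def TB_def Rt_def
    using At_mult[OF A R] At_mult[OF R B] h3' by metis
  have h4: "St * TB = TA * St" unfolding TA_def TB_def St_def
    using At_mult[OF B S] At_mult[OF S A] h4' by metis
  from U[unfolded unital_iff[OF A B R]] obtain p0 k where
    u: "TB ^\<^sub>m p0 *\<^sub>v (Rt *\<^sub>v one_vec n) = TB ^\<^sub>m (p0 + k) *\<^sub>v one_vec m"
    unfolding TB_def Rt_def by blast
  define \<Theta> where "\<Theta> = mapc B Rt k"
  have F: "\<Theta> (dg_class A v j) = dg_class B (Rt *\<^sub>v v) (j + k)" if "v \<in> carrier_vec n" for v j
    unfolding \<Theta>_def using mapc_class[OF A B Rt h3[unfolded TA_def TB_def] that] TA_def TB_def by simp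
  have hom: "\<Theta> \<in> hom (dim_group A) (dim_group B)"
    by (rule cform_hom[OF A B Rt h3[unfolded TA_def TB_def] F])
  have sw: "dg_class B w i = \<Theta> (dg_class A (St *\<^sub>v (TB ^\<^sub>m k *\<^sub>v w)) (i + l))" if w: "w \<in> carrier_vec m" for w i
  proof -
    have c: "St *\<^sub>v (TB ^\<^sub>m k *\<^sub>v w) \<in> carrier_vec n" using St TB w by simp
    have "Rt *\<^sub>v (St *\<^sub>v (TB ^\<^sub>m k *\<^sub>v w)) = TB ^\<^sub>m l *\<^sub>v (TB ^\<^sub>m k *\<^sub>v w)"
      using st_rt[OF Rt St h2] TB w by simp
    also have "\<dots> = TB ^\<^sub>m (k + l) *\<^sub>v w" using pow_vec[OF TB w] by (simp add: add.commute)
    finally have e: "Rt *\<^sub>v (St *\<^sub>v (TB ^\<^sub>m k *\<^sub>v w)) = TB ^\<^sub>m (k + l) *\<^sub>v w" .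
    show ?thesis unfolding F[OF c] e using class_shift[OF B w, of i "k + l"] TB_def by (simp add: ac_simps)
  qed
  have inj: "inj_on \<Theta> (carrier (dim_group A))"
  proof (rule inj_onI)
    fix x y assume xc: "x \<in> carrier (dim_group A)" and yc: "y \<in> carrier (dim_group A)" and eq: "\<Theta> x = \<Theta> y"
    from carrier_dg[OF A, THEN iffD1, OF xc] obtain v j where v: "v \<in> carrier_vec n" and x: "x = dg_class A v j" by blast
    from carrier_dg[OF A, THEN iffD1, OF yc] obtain v' j' where v': "v' \<in> carrier_vec n" and y: "y = dg_class A v' j'" by blast
    from eq[unfolded x y F[OF v] F[OF v']] class_eq[OF B, of "Rt *\<^sub>v v" "Rt *\<^sub>v v'" "j + k" "j' + k"] Rt v v'
    obtain p where p: "TB ^\<^sub>m (p + (j' + k)) *\<^sub>v (Rt *\<^sub>v v) = TB ^\<^sub>m (p + (j + k)) *\<^sub>v (Rt *\<^sub>v v')"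
      unfolding TB_def by auto
    then have "Rt *\<^sub>v (TA ^\<^sub>m (p + (j' + k)) *\<^sub>v v) = Rt *\<^sub>v (TA ^\<^sub>m (p + (j + k)) *\<^sub>v v')"
      by (simp only: intertw_pow_vec[OF Rt TA TB h3 v] intertw_pow_vec[OF Rt TA TB h3 v'])
    then have "St *\<^sub>v (Rt *\<^sub>v (TA ^\<^sub>m (p + (j' + k)) *\<^sub>v v)) = St *\<^sub>v (Rt *\<^sub>v (TA ^\<^sub>m (p + (j + k)) *\<^sub>v v'))"
      by simp
    then have "TA ^\<^sub>m l *\<^sub>v (TA ^\<^sub>m (p + (j' + k)) *\<^sub>v v) = TA ^\<^sub>m l *\<^sub>v (TA ^\<^sub>m (p + (j + k)) *\<^sub>v v')"
      using st_rt[OF St Rt h1] TA v v' by simp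
    then have "TA ^\<^sub>m (l + (p + (j' + k))) *\<^sub>v v = TA ^\<^sub>m (l + (p + (j + k))) *\<^sub>v v'"
      by (simp only: pow_vec[OF TA v] pow_vec[OF TA v'])
    then have "TA ^\<^sub>m ((l + p + k) + j') *\<^sub>v v = TA ^\<^sub>m ((l + p + k) + j) *\<^sub>v v'"
      by (simp add: ac_simps)
    then show "x = y" unfolding x y using class_eq[OF A v v'] TA_def by blast
  qed
  have img: "\<Theta> ` carrier (dim_group A) = carrier (dim_group B)"
  proof
    show "\<Theta> ` carrier (dim_group A) \<subseteq> carrier (dim_group B)" using hom by (rule hom_carrier)
    show "carrier (dim_group B) \<subseteq> \<Theta> ` carrier (dim_group A)"
    proof
      fix y assume yc: "y \<in> carrier (dim_group B)"
      from carrier_dg[OF B, THEN iffD1, OF yc] obtain w i where w: "w \<in> carrier_vec m" and y: "y = dg_class B w i" by blast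
      have "St *\<^sub>v (TB ^\<^sub>m k *\<^sub>v w) \<in> carrier_vec n" using St TB w by simp
      then show "y \<in> \<Theta> ` carrier (dim_group A)" unfolding y sw[OF w, of i] by (intro imageI class_carrier[OF A])
    qed
  qed
  have iso: "\<Theta> \<in> iso (dim_group A) (dim_group B)"
    unfolding iso_def bij_betw_def using hom inj img by blast
  have pos: "\<Theta> ` dg_pos A = dg_pos B"
  proof
    show "\<Theta> ` dg_pos A \<subseteq> dg_pos B"
    proof
      fix y assume "y \<in> \<Theta> ` dg_pos A"
      then obtain x where "x \<in> dg_pos A" and y: "y = \<Theta> x" by blast
      then obtain v j where v: "v \<in> carrier_vec n" "nonneg v" and x: "x = dg_class A v j"
        using pos_iff[OF A] by blast
      have nn: "nonneg (Rt *\<^sub>v v)" unfolding Rt_def by (rule nonneg_At[OF R v(1,2)])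
      show "y \<in> dg_pos B" unfolding y x F[OF v(1)] pos_iff[OF B] using Rt v nn
        by (intro exI[of _ "Rt *\<^sub>v v"] conjI exI[of _ "j + k"]) auto
    qed
    show "dg_pos B \<subseteq> \<Theta> ` dg_pos A"
    proof
      fix y assume "y \<in> dg_pos B"
      then obtain w i where w: "w \<in> carrier_vec m" "nonneg w" and y: "y = dg_class B w i"
        using pos_iff[OF B] by blast
      have "TB ^\<^sub>m k *\<^sub>v w = At (B ^\<^sub>m k) *\<^sub>v w" unfolding TB_def using At_pow[OF B] by simp
      then have n1: "nonneg (TB ^\<^sub>m k *\<^sub>v w)" using nonneg_At[of "B ^\<^sub>m k" m m w] B w by simp
      have n2: "nonneg (St *\<^sub>v (TB ^\<^sub>m k *\<^sub>v w))" unfolding St_def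
        by (rule nonneg_At[OF S _ n1]) (use TB w in simp)
      have c: "St *\<^sub>v (TB ^\<^sub>m k *\<^sub>v w) \<in> carrier_vec n" using St TB w by simp
      have "dg_class A (St *\<^sub>v (TB ^\<^sub>m k *\<^sub>v w)) (i + l) \<in> dg_pos A" unfolding pos_iff[OF A]
        using c n2 by (intro exI[of _ "St *\<^sub>v (TB ^\<^sub>m k *\<^sub>v w)"] conjI exI[of _ "i + l"]) auto
      then show "y \<in> \<Theta> ` dg_pos A" unfolding y sw[OF w(1), of i] by (rule imageI)
    qed
  qed
  have comm: "\<forall>X \<in> carrier (dim_group A). \<Theta> (dg_theta A X) = dg_theta B (\<Theta> X)"
  proof
    fix x assume xc: "x \<in> carrier (dim_group A)"
    from carrier_dg[OF A, THEN iffD1, OF xc] obtain v j where v: "v \<in> carrier_vec n" and x: "x = dg_class A v j" by blast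
    have "Rt *\<^sub>v (TA *\<^sub>v v) = TB *\<^sub>v (Rt *\<^sub>v v)"
      using h3 Rt TA TB v by (metis assoc_mult_mat_vec)
    moreover have "TA *\<^sub>v v \<in> carrier_vec n" "Rt *\<^sub>v v \<in> carrier_vec m" using TA Rt v by auto
    ultimately show "\<Theta> (dg_theta A x) = dg_theta B (\<Theta> x)"
      unfolding x theta_class[OF A v] F[OF v] using theta_class[OF B] F TA_def TB_def by simp
  qed
  have unit: "\<Theta> (dg_unit A) = dg_unit B"
  proof -
    have "\<Theta> (dg_unit A) = dg_class B (Rt *\<^sub>v one_vec n) k" unfolding dg_unit_def dA using F by simp
    also have "\<dots> = dg_class B (one_vec m) 0"
      using class_eq[OF B, of "Rt *\<^sub>v one_vec n" "one_vec m" k 0] Rt u TB_def by auto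
    finally show ?thesis unfolding dg_unit_def dB .
  qed
  show ?thesis using iso pos comm unit by blast
qed


lemma uniform_p:
  fixes n :: nat and P :: "nat \<Rightarrow> nat \<Rightarrow> bool"
  assumes "\<forall>i<n. \<exists>p. P i p" and mono: "\<And>i p q. P i p \<Longrightarrow> P i (q + p)"
  shows "\<exists>p. \<forall>q. \<forall>i<n. P i (q + p)"
  using assms(1)
proof (induction n)
  case 0 then show ?case by simp
next
  case (Suc n)
  then obtain p where p: "\<forall>q. \<forall>i<n. P i (q + p)" by auto
  from Suc.prems obtain p' where p': "P n p'" by auto
  have "\<forall>q. \<forall>i<Suc n. P i (q + (p + p'))"
  proof (intro allI impI)
    fix q i assume "i < Suc n"
    then consider "i < n" | "i = n" by linarith
    then show "P i (q + (p + p'))"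
    proof cases
      case 1
      have "\<forall>i<n. P i ((q + p') + p)" using p by blast
      then show ?thesis using 1 by (simp add: ac_simps)
    next
      case 2 then show ?thesis using mono[OF p', of "q + p"] by (simp add: ac_simps)
    qed
  qed
  then show ?case by blast
qed

definition mat_cols :: "nat \<Rightarrow> nat \<Rightarrow> (nat \<Rightarrow> int vec) \<Rightarrow> nat mat" where
  "mat_cols n m W = mat n m (\<lambda>(i,j). nat (W i $ j))"

lemma mat_cols_carrier: "mat_cols n m W \<in> carrier_mat n m"
  unfolding mat_cols_def by simp

lemma mat_cols_unit:
  assumes i: "i < n" and W: "W i \<in> carrier_vec m" "nonneg (W i)"
  shows "At (mat_cols n m W) *\<^sub>v unit_vec n i = W i"
proof (rule eq_vecI)
  show "dim_vec (At (mat_cols n m W) *\<^sub>v unit_vec n i) = dim_vec (W i)"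
    using W unfolding At_def mat_cols_def by simp
  fix j assume "j < dim_vec (W i)"
  then have j: "j < m" using W by simp
  have "(At (mat_cols n m W) *\<^sub>v unit_vec n i) $ j = row (At (mat_cols n m W)) j \<bullet> unit_vec n i"
    using j unfolding At_def mat_cols_def by simp
  also have "\<dots> = row (At (mat_cols n m W)) j $ i" by (rule scalar_prod_right_unit[OF i])
  also have "\<dots> = int (nat (W i $ j))" using i j unfolding At_def mat_cols_def by simp
  also have "\<dots> = W i $ j" using W j unfolding nonneg_def by simp
  finally show "(At (mat_cols n m W) *\<^sub>v unit_vec n i) $ j = W i $ j" .
qed

lemma (in group) idem_one: "x \<in> carrier G \<Longrightarrow> x \<otimes> x = x \<Longrightarrow> x = \<one>"
  using l_cancel_one by blast

lemma ext_unit: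
  assumes G: "group G"
    and fc: "\<And>v. v \<in> carrier_vec n \<Longrightarrow> f v \<in> carrier G"
    and gc: "\<And>v. v \<in> carrier_vec n \<Longrightarrow> g v \<in> carrier G"
    and fa: "\<And>v w. v \<in> carrier_vec n \<Longrightarrow> w \<in> carrier_vec n \<Longrightarrow> f (v + w) = f v \<otimes>\<^bsub>G\<^esub> f w"
    and ga: "\<And>v w. v \<in> carrier_vec n \<Longrightarrow> w \<in> carrier_vec n \<Longrightarrow> g (v + w) = g v \<otimes>\<^bsub>G\<^esub> g w"
    and fg: "\<And>i. i < n \<Longrightarrow> f (unit_vec n i) = g (unit_vec n i)"
    and v: "(v :: int vec) \<in> carrier_vec n"
  shows "f v = g v"
proof -
  interpret group G by (rule G)
  have z: "h (0\<^sub>v n) = \<one>\<^bsub>G\<^esub>" if hc: "\<And>v. v \<in> carrier_vec n \<Longrightarrow> h v \<in> carrier G"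
    and ha: "\<And>v w. v \<in> carrier_vec n \<Longrightarrow> w \<in> carrier_vec n \<Longrightarrow> h (v + w) = h v \<otimes>\<^bsub>G\<^esub> h w" for h :: "int vec \<Rightarrow> _"
    using idem_one[OF hc[OF zero_carrier_vec]] ha[OF zero_carrier_vec zero_carrier_vec]
      left_zero_vec[OF zero_carrier_vec[of n]] by simp
  have neg: "h (- v) = inv\<^bsub>G\<^esub> (h v)" if hc: "\<And>v. v \<in> carrier_vec n \<Longrightarrow> h v \<in> carrier G"
    and ha: "\<And>v w. v \<in> carrier_vec n \<Longrightarrow> w \<in> carrier_vec n \<Longrightarrow> h (v + w) = h v \<otimes>\<^bsub>G\<^esub> h w"
    and v: "v \<in> carrier_vec n" for h :: "int vec \<Rightarrow> _" and v
  proof -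
    have "h (- v) \<otimes>\<^bsub>G\<^esub> h v = \<one>\<^bsub>G\<^esub>" using ha[of "- v" v] v z[OF hc ha] by simp
    then show ?thesis using inv_equality hc v by (metis uminus_carrier_vec)
  qed
  have nat_case: "f (of_nat c \<cdot>\<^sub>v unit_vec n i) = g (of_nat c \<cdot>\<^sub>v unit_vec n i)" if i: "i < n" for c i
  proof (induction c)
    case 0
    have "of_nat 0 \<cdot>\<^sub>v unit_vec n i = (0\<^sub>v n :: int vec)" by (intro eq_vecI) auto
    then show ?case using z[OF fc fa] z[OF gc ga] by simp
  next
    case (Suc c)
    have "of_nat (Suc c) \<cdot>\<^sub>v unit_vec n i = of_nat c \<cdot>\<^sub>v unit_vec n i + (unit_vec n i :: int vec)"
      by (intro eq_vecI) (auto simp: algebra_simps)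
    then show ?case using Suc fa ga fg[OF i] by simp
  qed
  have int_case: "f (c \<cdot>\<^sub>v unit_vec n i) = g (c \<cdot>\<^sub>v unit_vec n i)" if i: "i < n" for c :: int and i
  proof (cases "c \<ge> 0")
    case True
    then have "c = of_nat (nat c)" by simp
    then show ?thesis using nat_case[OF i, of "nat c"] by metis
  next
    case False
    have e: "c \<cdot>\<^sub>v unit_vec n i = - (of_nat (nat (- c)) \<cdot>\<^sub>v (unit_vec n i :: int vec))"
      using False by (intro eq_vecI) auto
    show ?thesis unfolding e using neg[OF fc fa] neg[OF gc ga] nat_case[OF i, of "nat (- c)"] by simp
  qed
  define vt where "vt t = vec n (\<lambda>i. if i < t then v $ i else 0)" for t
  have "t \<le> n \<Longrightarrow> f (vt t) = g (vt t)" for t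
  proof (induction t)
    case 0
    have "vt 0 = 0\<^sub>v n" unfolding vt_def by (intro eq_vecI) auto
    then show ?case using z[OF fc fa] z[OF gc ga] by simp
  next
    case (Suc t)
    have t: "t < n" using Suc by simp
    have e: "vt (Suc t) = vt t + (v $ t) \<cdot>\<^sub>v unit_vec n t" unfolding vt_def unit_vec_def
      using t by (intro eq_vecI) (auto simp: less_Suc_eq)
    have c: "vt t \<in> carrier_vec n" "(v $ t) \<cdot>\<^sub>v unit_vec n t \<in> carrier_vec n" unfolding vt_def by auto
    show ?case unfolding e fa[OF c] ga[OF c] using Suc t int_case[OF t] by simp
  qed
  moreover have "vt n = v" unfolding vt_def using v by (intro eq_vecI) auto
  ultimately show ?thesis by auto
qed


lemma theta_closed: "A \<in> carrier_mat n n \<Longrightarrow> X \<in> carrier (dim_group A) \<Longrightarrow> dg_theta A X \<in> carrier (dim_group A)"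
proof -
  assume A: "A \<in> carrier_mat n n" and xc: "X \<in> carrier (dim_group A)"
  from carrier_dg[OF A, THEN iffD1, OF xc] obtain v k where v: "v \<in> carrier_vec n" and x: "X = dg_class A v k" by blast
  have "At A *\<^sub>v v \<in> carrier_vec n" by (rule mult_mat_vec_carrier[OF At_carrier[OF A] v])
  then show ?thesis unfolding x theta_class[OF A v] by (rule class_carrier[OF A])
qed

lemma theta_pow_class: "A \<in> carrier_mat n n \<Longrightarrow> v \<in> carrier_vec n \<Longrightarrow>
  (dg_theta A ^^ j) (dg_class A v k) = dg_class A (At A ^\<^sub>m j *\<^sub>v v) k"
proof (induction j)
  case 0
  have "dim_row (At A) = n" using At_carrier[OF 0(1)] by simp
  then show ?case using 0 by simp
next
  case (Suc j)
  have T: "At A \<in> carrier_mat n n" using Suc by simp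
  have "(dg_theta A ^^ Suc j) (dg_class A v k) = dg_class A (At A *\<^sub>v (At A ^\<^sub>m j *\<^sub>v v)) k"
    using Suc theta_class[of A n "At A ^\<^sub>m j *\<^sub>v v" k] T by simp
  also have "At A *\<^sub>v (At A ^\<^sub>m j *\<^sub>v v) = At A ^\<^sub>m Suc j *\<^sub>v v"
    using pow_mat_comm[OF T, of j] T Suc.prems(2)
    by (metis assoc_mult_mat_vec pow_carrier_mat pow_mat.simps(2))
  finally show ?case .
qed

lemma theta_pow_closed: "A \<in> carrier_mat n n \<Longrightarrow> X \<in> carrier (dim_group A) \<Longrightarrow> (dg_theta A ^^ j) X \<in> carrier (dim_group A)"
  by (induction j) (auto intro: theta_closed)

lemma theta_pow_inj:
  assumes A: "A \<in> carrier_mat n n" and xc: "X \<in> carrier (dim_group A)" and yc: "Y \<in> carrier (dim_group A)"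
    and eq: "(dg_theta A ^^ j) X = (dg_theta A ^^ j) Y"
  shows "X = Y"
proof -
  have T: "At A \<in> carrier_mat n n" using A by simp
  from carrier_dg[OF A, THEN iffD1, OF xc] obtain v k where v: "v \<in> carrier_vec n" and x: "X = dg_class A v k" by blast
  from carrier_dg[OF A, THEN iffD1, OF yc] obtain v' k' where v': "v' \<in> carrier_vec n" and y: "Y = dg_class A v' k'" by blast
  from eq[unfolded x y theta_pow_class[OF A v] theta_pow_class[OF A v']]
  have "dg_class A (At A ^\<^sub>m j *\<^sub>v v) k = dg_class A (At A ^\<^sub>m j *\<^sub>v v') k'" .
  then obtain p where "At A ^\<^sub>m (p + k') *\<^sub>v (At A ^\<^sub>m j *\<^sub>v v) = At A ^\<^sub>m (p + k) *\<^sub>v (At A ^\<^sub>m j *\<^sub>v v')"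
    using class_eq[OF A, of "At A ^\<^sub>m j *\<^sub>v v" "At A ^\<^sub>m j *\<^sub>v v'" k k'] T v v' by auto
  then have "At A ^\<^sub>m ((p + j) + k') *\<^sub>v v = At A ^\<^sub>m ((p + j) + k) *\<^sub>v v'"
    by (simp add: pow_vec[OF T v] pow_vec[OF T v'] ac_simps)
  then show ?thesis unfolding x y using class_eq[OF A v v'] by blast
qed

lemma commute_pow:
  assumes A: "A \<in> carrier_mat n n"
    and hc: "\<And>X. X \<in> carrier (dim_group A) \<Longrightarrow> \<Phi> X \<in> carrier (dim_group B)"
    and cm: "\<forall>X \<in> carrier (dim_group A). \<Phi> (dg_theta A X) = dg_theta B (\<Phi> X)"
    and xc: "X \<in> carrier (dim_group A)"
  shows "\<Phi> ((dg_theta A ^^ j) X) = (dg_theta B ^^ j) (\<Phi> X)"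
proof (induction j)
  case 0 then show ?case by simp
next
  case (Suc j)
  have "\<Phi> ((dg_theta A ^^ Suc j) X) = \<Phi> (dg_theta A ((dg_theta A ^^ j) X))" by simp
  also have "\<dots> = dg_theta B (\<Phi> ((dg_theta A ^^ j) X))"
    using cm theta_pow_closed[OF A xc] by blast
  finally show ?case using Suc by simp
qed


lemma pow_comm_vec: "(T::'a::semiring_1 mat) \<in> carrier_mat n n \<Longrightarrow> x \<in> carrier_vec n \<Longrightarrow>
  T *\<^sub>v (T ^\<^sub>m p *\<^sub>v x) = T ^\<^sub>m p *\<^sub>v (T *\<^sub>v x)"
  by (metis assoc_mult_mat_vec pow_carrier_mat pow_mat_comm)

lemma unit_nonneg: "nonneg (unit_vec n i :: int vec)"
  unfolding nonneg_def unit_vec_def by auto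

lemma normal_form:
  assumes A: "A \<in> carrier_mat n n" and B: "B \<in> carrier_mat m m"
    and hom: "\<Phi> \<in> hom (dim_group A) (dim_group B)"
    and pos: "\<Phi> ` dg_pos A \<subseteq> dg_pos B"
    and cm: "\<forall>X \<in> carrier (dim_group A). \<Phi> (dg_theta A X) = dg_theta B (\<Phi> X)"
  shows "\<exists>R K. R \<in> carrier_mat n m \<and> At R * At A = At B * At R \<and>
     (\<forall>v \<in> carrier_vec n. \<forall>j. \<Phi> (dg_class A v j) = dg_class B (At R *\<^sub>v v) (j + K))"
proof -
  have TA: "At A \<in> carrier_mat n n" using A by simp
  have TB: "At B \<in> carrier_mat m m" using B by simp
  have GB: "group (dim_group B)" by (rule dg_group[OF B])
  have hc: "\<Phi> X \<in> carrier (dim_group B)" if "X \<in> carrier (dim_group A)" for X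
    using hom_in_carrier[OF hom that] .
  have "\<forall>i. \<exists>w. i < n \<longrightarrow> (w \<in> carrier_vec m \<and> nonneg w \<and> (\<exists>k. \<Phi> (dg_class A (unit_vec n i) 0) = dg_class B w k))"
  proof
    fix i
    show "\<exists>w. i < n \<longrightarrow> (w \<in> carrier_vec m \<and> nonneg w \<and> (\<exists>k. \<Phi> (dg_class A (unit_vec n i) 0) = dg_class B w k))"
    proof (cases "i < n")
      case True
      have "dg_class A (unit_vec n i) 0 \<in> dg_pos A" unfolding pos_iff[OF A]
        by (intro exI[of _ "unit_vec n i"] conjI exI[of _ 0] unit_nonneg) auto
      then have "\<Phi> (dg_class A (unit_vec n i) 0) \<in> dg_pos B" using pos by blast
      then obtain w k where "w \<in> carrier_vec m" "nonneg w" "\<Phi> (dg_class A (unit_vec n i) 0) = dg_class B w k"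
        unfolding pos_iff[OF B] by blast
      then show ?thesis by blast
    qed simp
  qed
  from choice[OF this] obtain W where W1: "\<forall>i. i < n \<longrightarrow> (W i \<in> carrier_vec m \<and> nonneg (W i) \<and>
     (\<exists>k. \<Phi> (dg_class A (unit_vec n i) 0) = dg_class B (W i) k))" by blast
  then have "\<forall>i. \<exists>k. i < n \<longrightarrow> \<Phi> (dg_class A (unit_vec n i) 0) = dg_class B (W i) k" by blast
  from choice[OF this] obtain Kf where Kf: "\<forall>i. i < n \<longrightarrow> \<Phi> (dg_class A (unit_vec n i) 0) = dg_class B (W i) (Kf i)"
    by blast
  define K0 where "K0 = sum Kf {..<n}"
  have KfK0: "Kf i \<le> K0" if "i < n" for i
    unfolding K0_def by (rule member_le_sum) (use that in auto)
  define W' where "W' i = At B ^\<^sub>m (K0 - Kf i) *\<^sub>v W i" for i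
  have W'c: "W' i \<in> carrier_vec m" if "i < n" for i unfolding W'_def using TB W1 that by simp
  have W'n: "nonneg (W' i)" if "i < n" for i
  proof -
    have "W' i = At (B ^\<^sub>m (K0 - Kf i)) *\<^sub>v W i" unfolding W'_def using At_pow[OF B] by simp
    then show ?thesis using nonneg_At[of "B ^\<^sub>m (K0 - Kf i)" m m "W i"] B W1 that by simp
  qed
  have W'e: "\<Phi> (dg_class A (unit_vec n i) 0) = dg_class B (W' i) K0" if "i < n" for i
  proof -
    have "\<Phi> (dg_class A (unit_vec n i) 0) = dg_class B (W i) (Kf i)" using Kf that by blast
    also have "\<dots> = dg_class B (W' i) (Kf i + (K0 - Kf i))" unfolding W'_def
      by (rule class_shift[OF B]) (use W1 that in blast)
    also have "Kf i + (K0 - Kf i) = K0" using KfK0[OF that] by simp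
    finally show ?thesis .
  qed
  define R0 where "R0 = mat_cols n m W'"
  have R0: "R0 \<in> carrier_mat n m" unfolding R0_def by (rule mat_cols_carrier)
  have R0t: "At R0 \<in> carrier_mat m n" using R0 by simp
  have R0u: "At R0 *\<^sub>v unit_vec n i = W' i" if "i < n" for i
    unfolding R0_def by (rule mat_cols_unit[of i n W' m, OF that W'c[OF that] W'n[OF that]])
  have lev0: "\<Phi> (dg_class A v 0) = dg_class B (At R0 *\<^sub>v v) K0" if v: "v \<in> carrier_vec n" for v
  proof (rule ext_unit[OF GB _ _ _ _ _ v, of "\<lambda>v. \<Phi> (dg_class A v 0)" "\<lambda>v. dg_class B (At R0 *\<^sub>v v) K0"])
    show "\<Phi> (dg_class A v 0) \<in> carrier (dim_group B)" if "v \<in> carrier_vec n" for v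
      using hc class_carrier[OF A that] by blast
    show "dg_class B (At R0 *\<^sub>v v) K0 \<in> carrier (dim_group B)" if "v \<in> carrier_vec n" for v
      using class_carrier[OF B] R0t that by simp
    show "\<Phi> (dg_class A (v + w) 0) = \<Phi> (dg_class A v 0) \<otimes>\<^bsub>dim_group B\<^esub> \<Phi> (dg_class A w 0)"
      if "v \<in> carrier_vec n" "w \<in> carrier_vec n" for v w
    proof -
      have "dg_class A v 0 \<otimes>\<^bsub>dim_group A\<^esub> dg_class A w 0 = dg_class A (v + w) 0"
        unfolding mult_dg add_class[OF A that] using TA that by simp
      then have "\<Phi> (dg_class A (v + w) 0) = \<Phi> (dg_class A v 0 \<otimes>\<^bsub>dim_group A\<^esub> dg_class A w 0)" by simp
      also have "\<dots> = \<Phi> (dg_class A v 0) \<otimes>\<^bsub>dim_group B\<^esub> \<Phi> (dg_class A w 0)"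
        by (rule hom_mult[OF hom class_carrier[OF A that(1)] class_carrier[OF A that(2)]])
      finally show ?thesis .
    qed
    show "dg_class B (At R0 *\<^sub>v (v + w)) K0 = dg_class B (At R0 *\<^sub>v v) K0 \<otimes>\<^bsub>dim_group B\<^esub> dg_class B (At R0 *\<^sub>v w) K0"
      if "v \<in> carrier_vec n" "w \<in> carrier_vec n" for v w
    proof -
      have c: "At R0 *\<^sub>v v \<in> carrier_vec m" "At R0 *\<^sub>v w \<in> carrier_vec m" "At R0 *\<^sub>v (v + w) \<in> carrier_vec m"
        using R0t that by auto
      have "dg_class B (At R0 *\<^sub>v (v + w)) K0 = dg_class B (At B ^\<^sub>m K0 *\<^sub>v (At R0 *\<^sub>v (v + w))) (K0 + K0)"
        by (rule class_shift[OF B c(3)])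
      also have "At B ^\<^sub>m K0 *\<^sub>v (At R0 *\<^sub>v (v + w)) = At B ^\<^sub>m K0 *\<^sub>v (At R0 *\<^sub>v v) + At B ^\<^sub>m K0 *\<^sub>v (At R0 *\<^sub>v w)"
        using R0t TB that c by (simp add: mult_add_distrib_mat_vec[of _ m n] mult_add_distrib_mat_vec[of _ m m])
      finally show ?thesis unfolding mult_dg add_class[OF B c(1,2)] .
    qed
    show "\<Phi> (dg_class A (unit_vec n i) 0) = dg_class B (At R0 *\<^sub>v unit_vec n i) K0" if "i < n" for i
      using W'e[OF that] R0u[OF that] by simp
  qed
  have levj: "\<Phi> (dg_class A v j) = dg_class B (At R0 *\<^sub>v v) (j + K0)" if v: "v \<in> carrier_vec n" for v j
  proof (rule theta_pow_inj[OF B _ _, of _ _ j])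
    have Rv: "At R0 *\<^sub>v v \<in> carrier_vec m" using R0t v by simp
    show "\<Phi> (dg_class A v j) \<in> carrier (dim_group B)" using hc class_carrier[OF A v] by blast
    show "dg_class B (At R0 *\<^sub>v v) (j + K0) \<in> carrier (dim_group B)" using class_carrier[OF B Rv] .
    have "(dg_theta B ^^ j) (\<Phi> (dg_class A v j)) = \<Phi> ((dg_theta A ^^ j) (dg_class A v j))"
      using commute_pow[OF A hc cm class_carrier[OF A v]] by simp
    also have "(dg_theta A ^^ j) (dg_class A v j) = dg_class A v 0"
      using theta_pow_class[OF A v] class_shift[OF A v, of 0 j] by simp
    also have "\<Phi> (dg_class A v 0) = dg_class B (At R0 *\<^sub>v v) K0" by (rule lev0[OF v])
    also have "\<dots> = dg_class B (At B ^\<^sub>m j *\<^sub>v (At R0 *\<^sub>v v)) (j + K0)"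
      using class_shift[OF B Rv, of K0 j] by (simp add: add.commute)
    also have "\<dots> = (dg_theta B ^^ j) (dg_class B (At R0 *\<^sub>v v) (j + K0))"
      using theta_pow_class[OF B Rv] by simp
    finally show "(dg_theta B ^^ j) (\<Phi> (dg_class A v j)) = (dg_theta B ^^ j) (dg_class B (At R0 *\<^sub>v v) (j + K0))" .
  qed
  define P where "P i p \<longleftrightarrow> At B ^\<^sub>m p *\<^sub>v (At R0 *\<^sub>v (At A *\<^sub>v unit_vec n i)) =
      At B ^\<^sub>m p *\<^sub>v (At B *\<^sub>v (At R0 *\<^sub>v unit_vec n i))" for i p
  have ex: "\<forall>i<n. \<exists>p. P i p"
  proof (intro allI impI)
    fix i assume i: "i < n"
    have u: "unit_vec n i \<in> carrier_vec n" by simp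
    have c1: "At A *\<^sub>v unit_vec n i \<in> carrier_vec n" using TA by simp
    have c2: "At R0 *\<^sub>v (At A *\<^sub>v unit_vec n i) \<in> carrier_vec m" using R0t c1 by simp
    have c3: "At B *\<^sub>v (At R0 *\<^sub>v unit_vec n i) \<in> carrier_vec m" using R0t TB by simp
    have "\<Phi> (dg_theta A (dg_class A (unit_vec n i) 0)) = dg_theta B (\<Phi> (dg_class A (unit_vec n i) 0))"
      using cm class_carrier[OF A u] by blast
    then have "dg_class B (At R0 *\<^sub>v (At A *\<^sub>v unit_vec n i)) K0 = dg_class B (At B *\<^sub>v (At R0 *\<^sub>v unit_vec n i)) K0"
      unfolding theta_class[OF A u] lev0[OF c1] lev0[OF u] theta_class[OF B mult_mat_vec_carrier[OF R0t u]] .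
    then obtain p where "At B ^\<^sub>m (p + K0) *\<^sub>v (At R0 *\<^sub>v (At A *\<^sub>v unit_vec n i)) =
      At B ^\<^sub>m (p + K0) *\<^sub>v (At B *\<^sub>v (At R0 *\<^sub>v unit_vec n i))"
      using class_eq[OF B c2 c3] by blast
    then show "\<exists>p. P i p" unfolding P_def by blast
  qed
  have mono: "P i (q + p)" if "P i p" for i p q
  proof -
    have c2: "At R0 *\<^sub>v (At A *\<^sub>v unit_vec n i) \<in> carrier_vec m" using R0t TA by simp
    have c3: "At B *\<^sub>v (At R0 *\<^sub>v unit_vec n i) \<in> carrier_vec m" using R0t TB by simp
    show ?thesis using that unfolding P_def using powc[OF TB c2 c3] by blast
  qed
  obtain P0 where P0: "\<forall>q. \<forall>i<n. P i (q + P0)" using uniform_p[OF ex mono] by blast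
  define R1 where "R1 = R0 * B ^\<^sub>m P0"
  have R1: "R1 \<in> carrier_mat n m" unfolding R1_def using R0 B by simp
  have R1t: "At R1 = At B ^\<^sub>m P0 * At R0" unfolding R1_def using At_mult[OF R0 pow_carrier_mat[OF B]] At_pow[OF B] by simp
  have R1v: "At R1 *\<^sub>v v = At B ^\<^sub>m P0 *\<^sub>v (At R0 *\<^sub>v v)" if "v \<in> carrier_vec n" for v
    unfolding R1t using TB R0t that by (simp add: assoc_mult_mat_vec[of _ m m _ n])
  have inter: "At R1 * At A = At B * At R1"
  proof (rule mat_eq_unit[of _ m n])
    show "At R1 * At A \<in> carrier_mat m n" by (rule mult_carrier_mat[OF At_carrier[OF R1] TA])
    show "At B * At R1 \<in> carrier_mat m n" by (rule mult_carrier_mat[OF TB At_carrier[OF R1]])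
    fix i assume i: "i < n"
    have u: "unit_vec n i \<in> carrier_vec n" by simp
    have "(At R1 * At A) *\<^sub>v unit_vec n i = At B ^\<^sub>m P0 *\<^sub>v (At R0 *\<^sub>v (At A *\<^sub>v unit_vec n i))"
      using R1v[of "At A *\<^sub>v unit_vec n i"] R1 TA by (simp add: assoc_mult_mat_vec[of _ m n _ n])
    also have "\<dots> = At B ^\<^sub>m P0 *\<^sub>v (At B *\<^sub>v (At R0 *\<^sub>v unit_vec n i))"
      using P0 i unfolding P_def by (metis add_0)
    also have "\<dots> = At B *\<^sub>v (At B ^\<^sub>m P0 *\<^sub>v (At R0 *\<^sub>v unit_vec n i))"
      using pow_comm_vec[OF TB, of "At R0 *\<^sub>v unit_vec n i" P0] R0t by simp
    also have "\<dots> = (At B * At R1) *\<^sub>v unit_vec n i"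
      using R1v[OF u] R1 TB by (simp add: assoc_mult_mat_vec[of _ m m _ n])
    finally show "(At R1 * At A) *\<^sub>v unit_vec n i = (At B * At R1) *\<^sub>v unit_vec n i" .
  qed
  have form: "\<forall>v \<in> carrier_vec n. \<forall>j. \<Phi> (dg_class A v j) = dg_class B (At R1 *\<^sub>v v) (j + (K0 + P0))"
  proof (intro ballI allI)
    fix v :: "int vec" and j assume v: "v \<in> carrier_vec n"
    have "\<Phi> (dg_class A v j) = dg_class B (At R0 *\<^sub>v v) (j + K0)" by (rule levj[OF v])
    also have "\<dots> = dg_class B (At B ^\<^sub>m P0 *\<^sub>v (At R0 *\<^sub>v v)) (j + K0 + P0)"
      by (rule class_shift[OF B]) (use R0t v in simp)
    finally show "\<Phi> (dg_class A v j) = dg_class B (At R1 *\<^sub>v v) (j + (K0 + P0))"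
      using R1v[OF v] by (simp add: add.assoc)
  qed
  show ?thesis using R1 inter form by blast
qed


lemma backward:
  assumes A: "A \<in> carrier_mat n n" and B: "B \<in> carrier_mat m m"
    and iso: "\<Theta> \<in> iso (dim_group A) (dim_group B)"
    and pos: "\<Theta> ` dg_pos A = dg_pos B"
    and cm: "\<forall>X \<in> carrier (dim_group A). \<Theta> (dg_theta A X) = dg_theta B (\<Theta> X)"
    and un: "\<Theta> (dg_unit A) = dg_unit B"
  shows "unitally_shift_equivalent A B"
proof -
  have dA: "dim_row A = n" and dB: "dim_row B = m" using A B by auto
  have TA: "At A \<in> carrier_mat n n" using A by simp
  have TB: "At B \<in> carrier_mat m m" using B by simp
  have GA: "group (dim_group A)" by (rule dg_group[OF A])
  have hom: "\<Theta> \<in> hom (dim_group A) (dim_group B)" using iso by (rule iso_imp_homomorphism)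
  have bij: "bij_betw \<Theta> (carrier (dim_group A)) (carrier (dim_group B))" using iso unfolding iso_def by blast
  have inj: "inj_on \<Theta> (carrier (dim_group A))" and img: "\<Theta> ` carrier (dim_group A) = carrier (dim_group B)"
    using bij unfolding bij_betw_def by auto
  define \<Theta>' where "\<Theta>' = inv_into (carrier (dim_group A)) \<Theta>"
  have iso': "\<Theta>' \<in> iso (dim_group B) (dim_group A)" unfolding \<Theta>'_def by (rule group.iso_set_sym[OF GA iso])
  have hom': "\<Theta>' \<in> hom (dim_group B) (dim_group A)" using iso' by (rule iso_imp_homomorphism)
  have bk: "\<Theta>' (\<Theta> X) = X" if "X \<in> carrier (dim_group A)" for X
    unfolding \<Theta>'_def using inv_into_f_f[OF inj that] .
  have fw: "\<Theta> (\<Theta>' Y) = Y" if "Y \<in> carrier (dim_group B)" for Y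
    unfolding \<Theta>'_def using f_inv_into_f[of Y \<Theta> "carrier (dim_group A)"] img that by blast
  have posA: "dg_pos A \<subseteq> carrier (dim_group A)"
  proof
    fix x assume "x \<in> dg_pos A"
    then obtain v k where "v \<in> carrier_vec n" "x = dg_class A v k" unfolding pos_iff[OF A] by blast
    then show "x \<in> carrier (dim_group A)" using class_carrier[OF A] by simp
  qed
  have pos': "\<Theta>' ` dg_pos B \<subseteq> dg_pos A"
  proof
    fix y assume "y \<in> \<Theta>' ` dg_pos B"
    then obtain x where x: "x \<in> dg_pos B" and y: "y = \<Theta>' x" by (rule imageE)
    have "x \<in> \<Theta> ` dg_pos A" using pos x by simp
    then obtain z where z: "z \<in> dg_pos A" and xz: "x = \<Theta> z" by (rule imageE)
    have "y = z" unfolding y xz using bk posA z by blast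
    then show "y \<in> dg_pos A" using z by simp
  qed
  have cm': "\<forall>Y \<in> carrier (dim_group B). \<Theta>' (dg_theta B Y) = dg_theta A (\<Theta>' Y)"
  proof
    fix Y assume "Y \<in> carrier (dim_group B)"
    then have "Y \<in> \<Theta> ` carrier (dim_group A)" using img by simp
    then obtain X where X: "X \<in> carrier (dim_group A)" and Y: "Y = \<Theta> X" by (rule imageE)
    have "\<Theta>' (dg_theta B Y) = \<Theta>' (\<Theta> (dg_theta A X))" unfolding Y using cm X by simp
    also have "\<dots> = dg_theta A X" using bk theta_closed[OF A X] by blast
    also have "\<dots> = dg_theta A (\<Theta>' Y)" unfolding Y using bk X by simp
    finally show "\<Theta>' (dg_theta B Y) = dg_theta A (\<Theta>' Y)" .
  qed
  obtain R1 K1 where R1: "R1 \<in> carrier_mat n m" and i1: "At R1 * At A = At B * At R1"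
    and f1: "\<forall>v \<in> carrier_vec n. \<forall>j. \<Theta> (dg_class A v j) = dg_class B (At R1 *\<^sub>v v) (j + K1)"
    using normal_form[OF A B hom] pos cm by blast
  obtain S1 K2 where S1: "S1 \<in> carrier_mat m n" and i2: "At S1 * At B = At A * At S1"
    and f2: "\<forall>w \<in> carrier_vec m. \<forall>j. \<Theta>' (dg_class B w j) = dg_class A (At S1 *\<^sub>v w) (j + K2)"
    using normal_form[OF B A hom' pos' cm'] by blast
  have R1t: "At R1 \<in> carrier_mat m n" and S1t: "At S1 \<in> carrier_mat n m" using R1 S1 by auto
  define K where "K = K1 + K2"
  define PA where "PA i p \<longleftrightarrow> At A ^\<^sub>m p *\<^sub>v (At S1 *\<^sub>v (At R1 *\<^sub>v unit_vec n i)) = At A ^\<^sub>m (p + K) *\<^sub>v unit_vec n i" for i p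
  define PB where "PB i p \<longleftrightarrow> At B ^\<^sub>m p *\<^sub>v (At R1 *\<^sub>v (At S1 *\<^sub>v unit_vec m i)) = At B ^\<^sub>m (p + K) *\<^sub>v unit_vec m i" for i p
  have exA: "\<forall>i<n. \<exists>p. PA i p"
  proof (intro allI impI)
    fix i assume i: "i < n"
    have u: "unit_vec n i \<in> carrier_vec n" by simp
    have c: "At S1 *\<^sub>v (At R1 *\<^sub>v unit_vec n i) \<in> carrier_vec n" using R1t S1t by simp
    have "\<Theta>' (\<Theta> (dg_class A (unit_vec n i) 0)) = dg_class A (unit_vec n i) 0"
      using bk class_carrier[OF A u] by blast
    then have "dg_class A (At S1 *\<^sub>v (At R1 *\<^sub>v unit_vec n i)) (0 + K1 + K2) = dg_class A (unit_vec n i) 0"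
      using f1 f2 u R1t by simp
    then obtain p where "At A ^\<^sub>m (p + 0) *\<^sub>v (At S1 *\<^sub>v (At R1 *\<^sub>v unit_vec n i)) = At A ^\<^sub>m (p + (0 + K1 + K2)) *\<^sub>v unit_vec n i"
      using class_eq[OF A c u] by blast
    then show "\<exists>p. PA i p" unfolding PA_def K_def by (intro exI[of _ p]) (simp add: add.assoc)
  qed
  have exB: "\<forall>i<m. \<exists>p. PB i p"
  proof (intro allI impI)
    fix i assume i: "i < m"
    have u: "unit_vec m i \<in> carrier_vec m" by simp
    have c: "At R1 *\<^sub>v (At S1 *\<^sub>v unit_vec m i) \<in> carrier_vec m" using R1t S1t by simp
    have "\<Theta> (\<Theta>' (dg_class B (unit_vec m i) 0)) = dg_class B (unit_vec m i) 0"
      using fw class_carrier[OF B u] by blast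
    then have "dg_class B (At R1 *\<^sub>v (At S1 *\<^sub>v unit_vec m i)) (0 + K2 + K1) = dg_class B (unit_vec m i) 0"
      using f1 f2 u S1t by simp
    then obtain p where "At B ^\<^sub>m (p + 0) *\<^sub>v (At R1 *\<^sub>v (At S1 *\<^sub>v unit_vec m i)) = At B ^\<^sub>m (p + (0 + K2 + K1)) *\<^sub>v unit_vec m i"
      using class_eq[OF B c u] by blast
    then show "\<exists>p. PB i p" unfolding PB_def K_def by (intro exI[of _ p]) (simp add: ac_simps)
  qed
  have monoA: "PA i (q + p)" if "PA i p" for i p q
  proof -
    have c: "At S1 *\<^sub>v (At R1 *\<^sub>v unit_vec n i) \<in> carrier_vec n" using R1t S1t by simp
    show ?thesis unfolding PA_def
      by (rule powc2[OF TA c _ that[unfolded PA_def], where c=q]) (simp_all add: add.assoc)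
  qed
  have monoB: "PB i (q + p)" if "PB i p" for i p q
  proof -
    have c: "At R1 *\<^sub>v (At S1 *\<^sub>v unit_vec m i) \<in> carrier_vec m" using R1t S1t by simp
    show ?thesis unfolding PB_def
      by (rule powc2[OF TB c _ that[unfolded PB_def], where c=q]) (simp_all add: add.assoc)
  qed
  obtain pA where pA: "\<forall>q. \<forall>i<n. PA i (q + pA)" using uniform_p[OF exA monoA] by blast
  obtain pB where pB: "\<forall>q. \<forall>i<m. PB i (q + pB)" using uniform_p[OF exB monoB] by blast
  define Q where "Q = Suc (pA + pB)"
  have QA: "PA i Q" if "i < n" for i using pA that unfolding Q_def by (metis add_Suc add.commute)
  have QB: "PB i Q" if "i < m" for i using pB that unfolding Q_def by (metis add_Suc)
  have MA: "At A ^\<^sub>m Q * (At S1 * At R1) = At A ^\<^sub>m (Q + K)"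
  proof (rule mat_eq_unit[of _ n n])
    show "At A ^\<^sub>m Q * (At S1 * At R1) \<in> carrier_mat n n"
      by (rule mult_carrier_mat[OF pow_carrier_mat[OF TA] mult_carrier_mat[OF S1t R1t]])
    show "At A ^\<^sub>m (Q + K) \<in> carrier_mat n n" using TA by simp
    fix i assume i: "i < n"
    have "(At A ^\<^sub>m Q * (At S1 * At R1)) *\<^sub>v unit_vec n i = At A ^\<^sub>m Q *\<^sub>v (At S1 *\<^sub>v (At R1 *\<^sub>v unit_vec n i))"
      using TA R1t S1t by (simp add: assoc_mult_mat_vec[of _ n n _ n] assoc_mult_mat_vec[of _ n m _ n])
    then show "(At A ^\<^sub>m Q * (At S1 * At R1)) *\<^sub>v unit_vec n i = At A ^\<^sub>m (Q + K) *\<^sub>v unit_vec n i"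
      using QA[OF i] unfolding PA_def by simp
  qed
  have MB: "At B ^\<^sub>m Q * (At R1 * At S1) = At B ^\<^sub>m (Q + K)"
  proof (rule mat_eq_unit[of _ m m])
    show "At B ^\<^sub>m Q * (At R1 * At S1) \<in> carrier_mat m m"
      by (rule mult_carrier_mat[OF pow_carrier_mat[OF TB] mult_carrier_mat[OF R1t S1t]])
    show "At B ^\<^sub>m (Q + K) \<in> carrier_mat m m" using TB by simp
    fix i assume i: "i < m"
    have "(At B ^\<^sub>m Q * (At R1 * At S1)) *\<^sub>v unit_vec m i = At B ^\<^sub>m Q *\<^sub>v (At R1 *\<^sub>v (At S1 *\<^sub>v unit_vec m i))"
      using TB R1t S1t by (simp add: assoc_mult_mat_vec[of _ m m _ m] assoc_mult_mat_vec[of _ m n _ m])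
    then show "(At B ^\<^sub>m Q * (At R1 * At S1)) *\<^sub>v unit_vec m i = At B ^\<^sub>m (Q + K) *\<^sub>v unit_vec m i"
      using QB[OF i] unfolding PB_def by simp
  qed
  define S where "S = S1 * A ^\<^sub>m Q"
  define l where "l = Q + K"
  have S: "S \<in> carrier_mat m n" unfolding S_def using S1 A by simp
  have St: "At S = At A ^\<^sub>m Q * At S1" unfolding S_def using At_mult[OF S1 pow_carrier_mat[OF A]] At_pow[OF A] by simp
  have AQ: "At A ^\<^sub>m Q \<in> carrier_mat n n" using TA by simp
  have BQ: "At B ^\<^sub>m Q \<in> carrier_mat m m" using TB by simp
  have e1: "A ^\<^sub>m l = R1 * S"
  proof (rule At_inj)
    have "At (R1 * S) = At S * At R1" by (rule At_mult[OF R1 S])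
    also have "\<dots> = (At A ^\<^sub>m Q * At S1) * At R1" unfolding St ..
    also have "\<dots> = At A ^\<^sub>m Q * (At S1 * At R1)" by (rule assoc_mult_mat[OF AQ S1t R1t])
    also have "\<dots> = At (A ^\<^sub>m l)" unfolding MA l_def At_pow[OF A] ..
    finally show "At (A ^\<^sub>m l) = At (R1 * S)" ..
  qed
  have e2: "B ^\<^sub>m l = S * R1"
  proof (rule At_inj)
    have "At (S * R1) = At R1 * At S" by (rule At_mult[OF S R1])
    also have "\<dots> = At R1 * (At A ^\<^sub>m Q * At S1)" unfolding St ..
    also have "\<dots> = (At R1 * At A ^\<^sub>m Q) * At S1" by (rule assoc_mult_mat[OF R1t AQ S1t, symmetric])
    also have "At R1 * At A ^\<^sub>m Q = At B ^\<^sub>m Q * At R1" by (rule intertw_pow[OF R1t TA TB i1])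
    also have "(At B ^\<^sub>m Q * At R1) * At S1 = At B ^\<^sub>m Q * (At R1 * At S1)" by (rule assoc_mult_mat[OF BQ R1t S1t])
    also have "\<dots> = At (B ^\<^sub>m l)" unfolding MB l_def At_pow[OF B] ..
    finally show "At (B ^\<^sub>m l) = At (S * R1)" ..
  qed
  have e3: "A * R1 = R1 * B"
    by (rule At_inj) (metis At_mult[OF A R1] At_mult[OF R1 B] i1)
  have e4: "B * S = S * A"
  proof (rule At_inj)
    have "At (B * S) = At S * At B" by (rule At_mult[OF B S])
    also have "\<dots> = (At A ^\<^sub>m Q * At S1) * At B" unfolding St ..
    also have "\<dots> = At A ^\<^sub>m Q * (At S1 * At B)" by (rule assoc_mult_mat[OF AQ S1t TB])
    also have "\<dots> = At A ^\<^sub>m Q * (At A * At S1)" unfolding i2 ..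
    also have "\<dots> = (At A ^\<^sub>m Q * At A) * At S1" by (rule assoc_mult_mat[OF AQ TA S1t, symmetric])
    also have "At A ^\<^sub>m Q * At A = At A * At A ^\<^sub>m Q" by (rule pow_mat_comm[OF TA, symmetric])
    also have "(At A * At A ^\<^sub>m Q) * At S1 = At A * (At A ^\<^sub>m Q * At S1)" by (rule assoc_mult_mat[OF TA AQ S1t])
    also have "\<dots> = At (S * A)" unfolding At_mult[OF S A] St ..
    finally show "At (B * S) = At (S * A)" .
  qed
  have se: "shift_equiv_via A B l R1 S"
    unfolding shift_equiv_via_def dA dB using e1 e2 e3 e4 R1 S unfolding l_def Q_def by auto
  have "\<Theta> (dg_class A (one_vec n) 0) = dg_class B (one_vec m) 0"
    using un unfolding dg_unit_def dA dB .
  then have "dg_class B (At R1 *\<^sub>v one_vec n) (0 + K1) = dg_class B (one_vec m) 0"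
    using f1 by simp
  then obtain p where "At B ^\<^sub>m (p + 0) *\<^sub>v (At R1 *\<^sub>v one_vec n) = At B ^\<^sub>m (p + (0 + K1)) *\<^sub>v one_vec m"
    using class_eq[OF B _ one_vec_carrier, of "At R1 *\<^sub>v one_vec n"] R1t by auto
  then have "unital_SE A B R1" unfolding unital_iff[OF A B R1] by auto
  then show ?thesis unfolding unitally_shift_equivalent_def using se by blast
qed

theorem proposition3p2:
  fixes A B :: "nat mat" and n m :: nat
  assumes "A \<in> carrier_mat n n" and "B \<in> carrier_mat m m"
  shows "unitally_shift_equivalent A B \<longleftrightarrow>
    (\<exists>\<Theta>. \<Theta> \<in> iso (dim_group A) (dim_group B) \<and>
         \<Theta> ` dg_pos A = dg_pos B \<and>
         (\<forall>X \<in> carrier (dim_group A). \<Theta> (dg_theta A X) = dg_theta B (\<Theta> X)) \<and>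
         \<Theta> (dg_unit A) = dg_unit B)"
proof
  assume "unitally_shift_equivalent A B"
  then obtain l R S where "shift_equiv_via A B l R S" "unital_SE A B R"
    unfolding unitally_shift_equivalent_def by blast
  then show "\<exists>\<Theta>. \<Theta> \<in> iso (dim_group A) (dim_group B) \<and>
         \<Theta> ` dg_pos A = dg_pos B \<and>
         (\<forall>X \<in> carrier (dim_group A). \<Theta> (dg_theta A X) = dg_theta B (\<Theta> X)) \<and>
         \<Theta> (dg_unit A) = dg_unit B" using forward[OF assms] by blast
next
  assume "\<exists>\<Theta>. \<Theta> \<in> iso (dim_group A) (dim_group B) \<and>
         \<Theta> ` dg_pos A = dg_pos B \<and>
         (\<forall>X \<in> carrier (dim_group A). \<Theta> (dg_theta A X) = dg_theta B (\<Theta> X)) \<and>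
         \<Theta> (dg_unit A) = dg_unit B"
  then obtain \<Theta> where "\<Theta> \<in> iso (dim_group A) (dim_group B)" "\<Theta> ` dg_pos A = dg_pos B"
    "\<forall>X \<in> carrier (dim_group A). \<Theta> (dg_theta A X) = dg_theta B (\<Theta> X)" "\<Theta> (dg_unit A) = dg_unit B"
    by blast
  then show "unitally_shift_equivalent A B" using backward[OF assms] by blast
qed

end
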